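(* Let $(A,\Delta,\Delta')$ be a commutative Hopf brace over a field $k$, with antipodes $S$ (for $\Delta$) and $T$ (for $\Delta'$), and write $A_{\Delta'}$ for the Hopf algebra $(A,m,1,\Delta',\epsilon,T)$. Then: (1) $A$ is a left $A_{\Delta'}$-comodule algebra via $\rho(a)=a_{(-1)}\otimes a_{(0)}:=S(a_1)a_{21'}\otimes a_{22'}$; (2) $A$ is a right $A_{\Delta'}$-comodule algebra via $$\varphi(a)=a_{[0]}\otimes a_{[1]}:=T(a_{1'})_{(-1)}a_{2'}\otimes T(a_{1'})_{(0)}a_{3'}=S(T(a_{1'})_1)\,T(a_{1'})_{21'}\,a_{2'}\otimes T(a_{1'})_{22'}\,a_{3'};$$ (3) $(\mathrm{id}\otimes S)\rho(a)=\rho(S(a))$ for all $a\in A$, i.e. $a_{(-1)}\otimes S(a_{(0)})=S(a)_{(-1)}\otimes S(a)_{(0)}$.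
   Context: All objects are over a field $k$. A Hopf brace $(A,\Delta,\Delta')$ consists of an algebra $(A,m,1)$ with two Hopf algebra structures $(A,m,1,\Delta,\varepsilon,S)$ and $(A,m,1,\Delta',\epsilon,T)$ on the same algebra such that for all $h\in A$: $h_{1'}\otimes h_{2'1}\otimes h_{2'2}=h_{11'}S(h_2)h_{31'}\otimes h_{12'}\otimes h_{32'}$. It is commutative if the algebra $A$ is commutative. Sweedler notation: $\Delta(h)=h_1\otimes h_2$, $\Delta'(h)=h_{1'}\otimes h_{2'}$, iterated $\Delta'$ written $h_{1'}\otimes h_{2'}\otimes h_{3'}$; mixed indices like $h_{21'}$ mean $\Delta'$ applied to $h_2$. A left (resp. right) comodule algebra is a comodule whose coaction is an algebra map. *)

theory Defs
  imports Complex_Main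
begin

text \<open>The algebra A is a type 'a of class comm_ring_1 (commutativity of the
Hopf brace), which is a k-algebra via a scalar multiplication sc over a field 'k.
Elements of A (x) A and A (x) A (x) A are represented by finite lists of pairs / triples
(finite sums of pure tensors); two such representatives denote the same tensor iff every
k-valued bilinear (resp. trilinear) form takes the same value on them (for vector spaces over a
field these forms separate points of the tensor product).\<close>

definition k_algebra :: "('k::field \<Rightarrow> 'a::comm_ring_1 \<Rightarrow> 'a) \<Rightarrow> bool" where
  "k_algebra sc \<longleftrightarrow> Vector_Spaces.vector_space sc \<and> (\<forall>c x y. sc c (x * y) = sc c x * y)"

definition bilinear_form :: "('k::field \<Rightarrow> 'a::comm_ring_1 \<Rightarrow> 'a) \<Rightarrow> ('a \<Rightarrow> 'a \<Rightarrow> 'k) \<Rightarrow> bool" where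
  "bilinear_form sc \<beta> \<longleftrightarrow>
     (\<forall>x y z. \<beta> (x + y) z = \<beta> x z + \<beta> y z \<and> \<beta> z (x + y) = \<beta> z x + \<beta> z y) \<and>
     (\<forall>c x y. \<beta> (sc c x) y = c * \<beta> x y \<and> \<beta> x (sc c y) = c * \<beta> x y)"

definition trilinear_form :: "('k::field \<Rightarrow> 'a::comm_ring_1 \<Rightarrow> 'a) \<Rightarrow> ('a \<Rightarrow> 'a \<Rightarrow> 'a \<Rightarrow> 'k) \<Rightarrow> bool" where
  "trilinear_form sc \<gamma> \<longleftrightarrow>
     (\<forall>x y z w. \<gamma> (x + y) z w = \<gamma> x z w + \<gamma> y z w \<and>
                \<gamma> z (x + y) w = \<gamma> z x w + \<gamma> z y w \<and>
                \<gamma> z w (x + y) = \<gamma> z w x + \<gamma> z w y) \<and>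
     (\<forall>c x y z. \<gamma> (sc c x) y z = c * \<gamma> x y z \<and> \<gamma> x (sc c y) z = c * \<gamma> x y z \<and>
                \<gamma> x y (sc c z) = c * \<gamma> x y z)"

definition teq2 :: "('k::field \<Rightarrow> 'a::comm_ring_1 \<Rightarrow> 'a) \<Rightarrow> ('a \<times> 'a) list \<Rightarrow> ('a \<times> 'a) list \<Rightarrow> bool" where
  "teq2 sc t s \<longleftrightarrow> (\<forall>\<beta>. bilinear_form sc \<beta> \<longrightarrow>
      sum_list (map (\<lambda>(x, y). \<beta> x y) t) = sum_list (map (\<lambda>(x, y). \<beta> x y) s))"

definition teq3 :: "('k::field \<Rightarrow> 'a::comm_ring_1 \<Rightarrow> 'a) \<Rightarrow> ('a \<times> 'a \<times> 'a) list \<Rightarrow> ('a \<times> 'a \<times> 'a) list \<Rightarrow> bool" where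
  "teq3 sc t s \<longleftrightarrow> (\<forall>\<gamma>. trilinear_form sc \<gamma> \<longrightarrow>
      sum_list (map (\<lambda>(x, y, z). \<gamma> x y z) t) = sum_list (map (\<lambda>(x, y, z). \<gamma> x y z) s))"

definition tmul :: "('a::comm_ring_1 \<times> 'a) list \<Rightarrow> ('a \<times> 'a) list \<Rightarrow> ('a \<times> 'a) list" where
  "tmul t s = concat (map (\<lambda>(x, y). map (\<lambda>(u, v). (x * u, y * v)) s) t)"

definition lin_to_tensor :: "('k::field \<Rightarrow> 'a::comm_ring_1 \<Rightarrow> 'a) \<Rightarrow> ('a \<Rightarrow> ('a \<times> 'a) list) \<Rightarrow> bool" where
  "lin_to_tensor sc f \<longleftrightarrow>
     (\<forall>x y. teq2 sc (f (x + y)) (f x @ f y)) \<and>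
     (\<forall>c x. teq2 sc (f (sc c x)) (map (\<lambda>(u, v). (sc c u, v)) (f x)))"

definition lin_endo :: "('k::field \<Rightarrow> 'a::comm_ring_1 \<Rightarrow> 'a) \<Rightarrow> ('a \<Rightarrow> 'a) \<Rightarrow> bool" where
  "lin_endo sc f \<longleftrightarrow> (\<forall>x y. f (x + y) = f x + f y) \<and> (\<forall>c x. f (sc c x) = sc c (f x))"

definition lin_functional :: "('k::field \<Rightarrow> 'a::comm_ring_1 \<Rightarrow> 'a) \<Rightarrow> ('a \<Rightarrow> 'k) \<Rightarrow> bool" where
  "lin_functional sc f \<longleftrightarrow> (\<forall>x y. f (x + y) = f x + f y) \<and> (\<forall>c x. f (sc c x) = c * f x)"

definition copL :: "('a \<Rightarrow> ('a \<times> 'a) list) \<Rightarrow> 'a \<Rightarrow> ('a \<times> 'a \<times> 'a) list" where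
  "copL D h = concat (map (\<lambda>(x, y). map (\<lambda>(u, v). (u, v, y)) (D x)) (D h))"

definition copR :: "('a \<Rightarrow> ('a \<times> 'a) list) \<Rightarrow> 'a \<Rightarrow> ('a \<times> 'a \<times> 'a) list" where
  "copR D h = concat (map (\<lambda>(x, y). map (\<lambda>(u, v). (x, u, v)) (D y)) (D h))"

definition hopf_algebra ::
  "('k::field \<Rightarrow> 'a::comm_ring_1 \<Rightarrow> 'a) \<Rightarrow> ('a \<Rightarrow> ('a \<times> 'a) list) \<Rightarrow> ('a \<Rightarrow> 'k) \<Rightarrow> ('a \<Rightarrow> 'a) \<Rightarrow> bool" where
  "hopf_algebra sc D e S \<longleftrightarrow>
     k_algebra sc \<and> lin_to_tensor sc D \<and> lin_functional sc e \<and> lin_endo sc S \<and>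
     (\<forall>h. teq3 sc (copL D h) (copR D h)) \<and>
     (\<forall>h. sum_list (map (\<lambda>(x, y). sc (e x) y) (D h)) = h) \<and>
     (\<forall>h. sum_list (map (\<lambda>(x, y). sc (e y) x) (D h)) = h) \<and>
     (\<forall>a b. teq2 sc (D (a * b)) (tmul (D a) (D b))) \<and> teq2 sc (D 1) [(1, 1)] \<and>
     (\<forall>a b. e (a * b) = e a * e b) \<and> e 1 = 1 \<and>
     (\<forall>h. sum_list (map (\<lambda>(x, y). S x * y) (D h)) = sc (e h) 1) \<and>
     (\<forall>h. sum_list (map (\<lambda>(x, y). x * S y) (D h)) = sc (e h) 1)"

text \<open>Hopf brace (A, D, D') with antipodes S, T and counits e, e'; the compatibility
  h_1' (x) h_2'1 (x) h_2'2 = h_11' S(h_2) h_31' (x) h_12' (x) h_32'.\<close>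
definition hopf_brace ::
  "('k::field \<Rightarrow> 'a::comm_ring_1 \<Rightarrow> 'a) \<Rightarrow> ('a \<Rightarrow> ('a \<times> 'a) list) \<Rightarrow> ('a \<Rightarrow> 'k) \<Rightarrow> ('a \<Rightarrow> 'a)
     \<Rightarrow> ('a \<Rightarrow> ('a \<times> 'a) list) \<Rightarrow> ('a \<Rightarrow> 'k) \<Rightarrow> ('a \<Rightarrow> 'a) \<Rightarrow> bool" where
  "hopf_brace sc D e S D' e' T \<longleftrightarrow>
     hopf_algebra sc D e S \<and> hopf_algebra sc D' e' T \<and>
     (\<forall>h. teq3 sc
        (concat (map (\<lambda>(x, y). map (\<lambda>(u, v). (x, u, v)) (D y)) (D' h)))
        (concat (map (\<lambda>(h1, h2, h3).
            concat (map (\<lambda>(p, q). map (\<lambda>(r, s). (p * S h2 * r, q, s)) (D' h3)) (D' h1)))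
          (copR D h))))"

definition left_comodule_algebra ::
  "('k::field \<Rightarrow> 'a::comm_ring_1 \<Rightarrow> 'a) \<Rightarrow> ('a \<Rightarrow> ('a \<times> 'a) list) \<Rightarrow> ('a \<Rightarrow> 'k)
     \<Rightarrow> ('a \<Rightarrow> ('a \<times> 'a) list) \<Rightarrow> bool" where
  "left_comodule_algebra sc D' e' \<rho> \<longleftrightarrow>
     lin_to_tensor sc \<rho> \<and>
     (\<forall>a. teq3 sc (concat (map (\<lambda>(w, v). map (\<lambda>(x, y). (x, y, v)) (D' w)) (\<rho> a)))
                  (concat (map (\<lambda>(w, v). map (\<lambda>(x, y). (w, x, y)) (\<rho> v)) (\<rho> a)))) \<and>
     (\<forall>a. sum_list (map (\<lambda>(w, v). sc (e' w) v) (\<rho> a)) = a) \<and>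
     (\<forall>a b. teq2 sc (\<rho> (a * b)) (tmul (\<rho> a) (\<rho> b))) \<and> teq2 sc (\<rho> 1) [(1, 1)]"

definition right_comodule_algebra ::
  "('k::field \<Rightarrow> 'a::comm_ring_1 \<Rightarrow> 'a) \<Rightarrow> ('a \<Rightarrow> ('a \<times> 'a) list) \<Rightarrow> ('a \<Rightarrow> 'k)
     \<Rightarrow> ('a \<Rightarrow> ('a \<times> 'a) list) \<Rightarrow> bool" where
  "right_comodule_algebra sc D' e' \<phi> \<longleftrightarrow>
     lin_to_tensor sc \<phi> \<and>
     (\<forall>a. teq3 sc (concat (map (\<lambda>(v, w). map (\<lambda>(x, y). (x, y, w)) (\<phi> v)) (\<phi> a)))
                  (concat (map (\<lambda>(v, w). map (\<lambda>(x, y). (v, x, y)) (D' w)) (\<phi> a)))) \<and>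
     (\<forall>a. sum_list (map (\<lambda>(v, w). sc (e' w) v) (\<phi> a)) = a) \<and>
     (\<forall>a b. teq2 sc (\<phi> (a * b)) (tmul (\<phi> a) (\<phi> b))) \<and> teq2 sc (\<phi> 1) [(1, 1)]"

definition brace_rho :: "('a::comm_ring_1 \<Rightarrow> ('a \<times> 'a) list) \<Rightarrow> ('a \<Rightarrow> 'a) \<Rightarrow> ('a \<Rightarrow> ('a \<times> 'a) list)
     \<Rightarrow> 'a \<Rightarrow> ('a \<times> 'a) list" where
  "brace_rho D S D' a = concat (map (\<lambda>(x, y). map (\<lambda>(u, v). (S x * u, v)) (D' y)) (D a))"

definition brace_phi :: "('a::comm_ring_1 \<Rightarrow> ('a \<times> 'a) list) \<Rightarrow> ('a \<Rightarrow> 'a) \<Rightarrow> ('a \<Rightarrow> ('a \<times> 'a) list)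
     \<Rightarrow> ('a \<Rightarrow> 'a) \<Rightarrow> 'a \<Rightarrow> ('a \<times> 'a) list" where
  "brace_phi D S D' T a = concat (map (\<lambda>(x, y, z).
       concat (map (\<lambda>(y1, y2). map (\<lambda>(u, v). (S y1 * u * y, v * z)) (D' y2)) (D (T x))))
     (copR D' a))"

end

theory Submission
  imports Defs
begin


definition swl :: "('a \<times> 'a) list \<Rightarrow> ('a \<Rightarrow> 'a \<Rightarrow> 'k::comm_ring_1) \<Rightarrow> 'k" where
  "swl t F = sum_list (map (\<lambda>(x, y). F x y) t)"

definition swl3 :: "('a \<times> 'a \<times> 'a) list \<Rightarrow> ('a \<Rightarrow> 'a \<Rightarrow> 'a \<Rightarrow> 'k::comm_ring_1) \<Rightarrow> 'k" where
  "swl3 t F = sum_list (map (\<lambda>(x, y, z). F x y z) t)"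

lemma swl_simps[simp]:
  "swl [] F = 0"
  "swl (p # t) F = F (fst p) (snd p) + swl t F"
  "swl (t @ s) F = swl t F + swl s F"
  by (auto simp: swl_def split: prod.splits)

lemma swl3_simps[simp]:
  "swl3 [] F = 0"
  "swl3 (p # t) F = F (fst p) (fst (snd p)) (snd (snd p)) + swl3 t F"
  "swl3 (t @ s) F = swl3 t F + swl3 s F"
  by (auto simp: swl3_def split: prod.splits)

lemma swl_concat[simp]:
  "swl (concat (map (\<lambda>(x, y). G x y) t)) F = swl t (\<lambda>x y. swl (G x y) F)"
  by (induction t) auto

lemma swl_map[simp]:
  "swl (map (\<lambda>(u, v). (f u v, g u v)) t) F = swl t (\<lambda>u v. F (f u v) (g u v))"
  by (induction t) auto

lemma swl3_concat[simp]:
  "swl3 (concat (map (\<lambda>(x, y). G x y) t)) F = swl t (\<lambda>x y. swl3 (G x y) F)"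
  by (induction t) auto

lemma swl3_map[simp]:
  "swl3 (map (\<lambda>(u, v). (f u v, g u v, h u v)) t) F = swl t (\<lambda>u v. F (f u v) (g u v) (h u v))"
  by (induction t) auto

lemma swl3_map_Pair[simp]:
  "swl3 (map (Pair x) t) F = swl t (F x)"
  by (induction t) auto

lemma swl3_concat3[simp]:
  "swl3 (concat (map (\<lambda>(x, y, z). G x y z) t)) F = swl3 t (\<lambda>x y z. swl3 (G x y z) F)"
  by (induction t) auto

lemma swl_concat3[simp]:
  "swl (concat (map (\<lambda>(x, y, z). G x y z) t)) F = swl3 t (\<lambda>x y z. swl (G x y z) F)"
  by (induction t) auto

lemma swl_add: "swl t (\<lambda>x y. F x y + G x y) = swl t F + swl t G"
  by (induction t) auto
lemma swl_cmult: "swl t (\<lambda>x y. c * F x y) = c * swl t F"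
  by (induction t) (auto simp: algebra_simps)
lemma swl_multc: "swl t (\<lambda>x y. F x y * c) = swl t F * c"
  by (induction t) (auto simp: algebra_simps)
lemma swl_zero[simp]: "swl t (\<lambda>x y. 0) = 0"
  by (induction t) auto
lemma swl_prod: "swl t F * swl s G = swl t (\<lambda>x y. swl s (\<lambda>u v. F x y * G u v))"
  by (simp only: swl_multc[symmetric]) (simp only: swl_cmult[symmetric])
lemma swl_swap: "swl t (\<lambda>x y. swl s (F x y)) = swl s (\<lambda>u v. swl t (\<lambda>x y. F x y u v))"
  by (induction t) (auto simp: swl_add)

locale kalg =
  fixes sc :: "'k::field \<Rightarrow> 'a::comm_ring_1 \<Rightarrow> 'a"
  assumes kalg: "k_algebra sc"
begin

sublocale vs: vector_space sc using kalg by (simp add: k_algebra_def)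

lemma sc_mult_left: "sc c (x * y) = sc c x * y"
  using kalg by (simp add: k_algebra_def)
lemma sc_mult_right: "x * sc c y = sc c (x * y)"
  using sc_mult_left[of c y x] by (simp add: mult.commute)

abbreviation lf :: "('a \<Rightarrow> 'k) \<Rightarrow> bool" where "lf \<equiv> lin_functional sc"

definition bil :: "('a \<Rightarrow> 'a \<Rightarrow> 'k) \<Rightarrow> bool" where
  "bil F \<longleftrightarrow> (\<forall>x. lf (F x)) \<and> (\<forall>y. lf (\<lambda>x. F x y))"

definition tri :: "('a \<Rightarrow> 'a \<Rightarrow> 'a \<Rightarrow> 'k) \<Rightarrow> bool" where
  "tri F \<longleftrightarrow> (\<forall>x y. lf (F x y)) \<and> (\<forall>x z. lf (\<lambda>y. F x y z)) \<and> (\<forall>y z. lf (\<lambda>x. F x y z))"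

abbreviation le :: "('a \<Rightarrow> 'a) \<Rightarrow> bool" where "le \<equiv> lin_endo sc"

lemma lfI: "(\<And>x y. f (x + y) = f x + f y) \<Longrightarrow> (\<And>c x. f (sc c x) = c * f x) \<Longrightarrow> lf f"
  by (simp add: lin_functional_def)
lemma lf_add_D: "lf f \<Longrightarrow> f (x + y) = f x + f y"
  by (simp add: lin_functional_def)
lemma lf_sc_D: "lf f \<Longrightarrow> f (sc c x) = c * f x"
  by (simp add: lin_functional_def)
lemma le_add_D: "le f \<Longrightarrow> f (x + y) = f x + f y"
  by (simp add: lin_endo_def)
lemma le_sc_D: "le f \<Longrightarrow> f (sc c x) = sc c (f x)"
  by (simp add: lin_endo_def)

lemma lf_zero: "lf f \<Longrightarrow> f 0 = 0"
  using lf_sc_D[of f 0 0] by simp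

lemma lf_sum_list: "lf f \<Longrightarrow> f (sum_list xs) = sum_list (map f xs)"
  by (induction xs) (auto simp: lf_zero lf_add_D)

lemma lf_sum_map: "lf f \<Longrightarrow> f (sum_list (map (\<lambda>(x, y). g x y) l)) = sum_list (map (\<lambda>(x, y). f (g x y)) l)"
  by (induction l) (auto simp: lf_zero lf_add_D)

lemma bilI: "(\<And>y. lf (\<lambda>x. F x y)) \<Longrightarrow> (\<And>x. lf (\<lambda>y. F x y)) \<Longrightarrow> bil F"
  by (simp add: bil_def)
lemma triI: "(\<And>y z. lf (\<lambda>x. F x y z)) \<Longrightarrow> (\<And>x z. lf (\<lambda>y. F x y z)) \<Longrightarrow> (\<And>x y. lf (\<lambda>z. F x y z)) \<Longrightarrow> tri F"
  by (simp add: tri_def)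

lemma bil_iff: "bilinear_form sc \<beta> \<longleftrightarrow> bil \<beta>"
  unfolding bilinear_form_def bil_def lin_functional_def by auto
lemma tri_iff: "trilinear_form sc \<beta> \<longleftrightarrow> tri \<beta>"
  unfolding trilinear_form_def tri_def lin_functional_def by auto

lemma teq2_iff: "teq2 sc t s \<longleftrightarrow> (\<forall>\<beta>. bil \<beta> \<longrightarrow> swl t \<beta> = swl s \<beta>)"
  by (simp add: teq2_def bil_iff swl_def)
lemma teq3_iff: "teq3 sc t s \<longleftrightarrow> (\<forall>\<beta>. tri \<beta> \<longrightarrow> swl3 t \<beta> = swl3 s \<beta>)"
  by (simp add: teq3_def tri_iff swl3_def)

lemma lf_add: "lf f \<Longrightarrow> lf g \<Longrightarrow> lf (\<lambda>x. f x + g x)"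
  by (rule lfI) (auto simp: lf_add_D lf_sc_D algebra_simps)
lemma lf_cmul: "lf f \<Longrightarrow> lf (\<lambda>x. c * f x)"
  by (rule lfI) (auto simp: lf_add_D lf_sc_D algebra_simps)
lemma lf_mulc: "lf f \<Longrightarrow> lf (\<lambda>x. f x * c)"
  by (rule lfI) (auto simp: lf_add_D lf_sc_D algebra_simps)
lemma lf_swl: "(\<And>u v. lf (\<lambda>x. F x u v)) \<Longrightarrow> lf (\<lambda>x. swl t (F x))"
proof (induction t)
  case Nil
  then show ?case by (auto intro!: lfI)
next
  case (Cons a t)
  then show ?case by (auto intro!: lf_add simp del: swl_simps simp: swl_simps(2)[abs_def])
qed
lemma lf_comp: "lf F \<Longrightarrow> le g \<Longrightarrow> lf (\<lambda>x. F (g x))"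
  by (rule lfI) (auto simp: le_add_D le_sc_D lf_add_D lf_sc_D)
lemma lf_bil1: "bil F \<Longrightarrow> le g \<Longrightarrow> lf (\<lambda>x. F (g x) y)"
  unfolding bil_def using lf_comp[of "\<lambda>x. F x y" g] by auto
lemma lf_bil2: "bil F \<Longrightarrow> le g \<Longrightarrow> lf (\<lambda>x. F y (g x))"
  unfolding bil_def using lf_comp[of "\<lambda>x. F y x" g] by auto
lemma lf_tri1: "tri F \<Longrightarrow> le g \<Longrightarrow> lf (\<lambda>x. F (g x) y z)"
  unfolding tri_def using lf_comp[of "\<lambda>x. F x y z" g] by auto
lemma lf_tri2: "tri F \<Longrightarrow> le g \<Longrightarrow> lf (\<lambda>x. F y (g x) z)"
  unfolding tri_def using lf_comp[of "\<lambda>x. F y x z" g] by auto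
lemma lf_tri3: "tri F \<Longrightarrow> le g \<Longrightarrow> lf (\<lambda>x. F y z (g x))"
  unfolding tri_def using lf_comp[of "\<lambda>x. F y z x" g] by auto

lemma le_id: "le (\<lambda>x. x)"
  by (simp add: lin_endo_def)
lemma le_mulc: "le g \<Longrightarrow> le (\<lambda>x. g x * c)"
  by (auto simp: lin_endo_def distrib_right sc_mult_left)
lemma le_cmul: "le g \<Longrightarrow> le (\<lambda>x. c * g x)"
  using le_mulc[of g c] by (simp add: mult.commute)

lemma lf_tensor: "lin_to_tensor sc D \<Longrightarrow> bil F \<Longrightarrow> le g \<Longrightarrow> lf (\<lambda>x. swl (D (g x)) F)"
proof (rule lfI)
  assume D: "lin_to_tensor sc D" and F: "bil F" and g: "le g"
  fix x y
  show "swl (D (g (x + y))) F = swl (D (g x)) F + swl (D (g y)) F"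
    using D F by (simp add: le_add_D[OF g] lin_to_tensor_def teq2_iff)
next
  assume D: "lin_to_tensor sc D" and F: "bil F" and g: "le g"
  fix c x
  have "swl (D (g (sc c x))) F = swl (map (\<lambda>(u, v). (sc c u, v)) (D (g x))) F"
    using D F by (simp add: le_sc_D[OF g] lin_to_tensor_def teq2_iff del: swl_map)
  also have "\<dots> = swl (D (g x)) (\<lambda>u v. c * F u v)"
  proof -
    have "\<And>u v. F (sc c u) v = c * F u v"
    proof -
      fix u v
      have "lf (\<lambda>x. F x v)" using F unfolding bil_def by blast
      from lf_sc_D[OF this, of c u] show "F (sc c u) v = c * F u v" by simp
    qed
    then show ?thesis by simp
  qed
  finally show "swl (D (g (sc c x))) F = c * swl (D (g x)) F"
    by (simp add: swl_cmult)
qed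

lemma sep:
  assumes "\<And>f. lf f \<Longrightarrow> f a = f b"
  shows "a = b"
proof (rule ccontr)
  assume ne: "a \<noteq> b"
  interpret p: vector_space_pair sc "(*) :: 'k \<Rightarrow> 'k \<Rightarrow> 'k"
    by unfold_locales (auto simp: algebra_simps)
  have "vs.independent {a - b}" using ne by simp
  from p.linear_independent_extend[OF this, of "\<lambda>_. 1"]
  obtain g where g: "Vector_Spaces.linear sc (*) g" "g (a - b) = 1" by auto
  have "lf g" using g(1) unfolding lin_functional_def
    by (simp add: Vector_Spaces.linear_iff)
  then have "g a = g b" by (rule assms)
  moreover have "g (a - b) = g a - g b"
    using lf_add_D[OF \<open>lf g\<close>, of "a - b" b] by simp
  ultimately show False using g(2) by simp
qed

end


locale hopf = kalg sc for sc :: "'k::field \<Rightarrow> 'a::comm_ring_1 \<Rightarrow> 'a" +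
  fixes D :: "'a \<Rightarrow> ('a \<times> 'a) list" and e :: "'a \<Rightarrow> 'k" and S :: "'a \<Rightarrow> 'a"
  assumes hopf: "hopf_algebra sc D e S"
begin

lemma D_lin: "lin_to_tensor sc D" using hopf by (simp add: hopf_algebra_def)
lemma lf_e: "lf e" using hopf by (simp add: hopf_algebra_def)
lemma le_S: "le S" using hopf by (simp add: hopf_algebra_def)
lemma e_mult: "e (a * b) = e a * e b" using hopf by (simp add: hopf_algebra_def)
lemma e_1: "e 1 = 1" using hopf by (simp add: hopf_algebra_def)

lemma lf_eI: "le g \<Longrightarrow> lf (\<lambda>x. e (g x))" by (rule lf_comp[OF lf_e])
lemma le_SI: "le g \<Longrightarrow> le (\<lambda>x. S (g x))"
  using le_S by (auto simp: lin_endo_def)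
lemma lf_DI: "bil F \<Longrightarrow> le g \<Longrightarrow> lf (\<lambda>x. swl (D (g x)) F)"
  by (rule lf_tensor[OF D_lin])
lemma lf_DI': "bil F \<Longrightarrow> lf (\<lambda>x. swl (D x) F)"
  using lf_DI[of F "\<lambda>x. x"] le_id by simp

lemma coassoc: "tri G \<Longrightarrow>
  swl (D h) (\<lambda>x y. swl (D x) (\<lambda>u v. G u v y)) = swl (D h) (\<lambda>x y. swl (D y) (\<lambda>u v. G x u v))"
  using hopf unfolding hopf_algebra_def teq3_iff by (simp add: copL_def copR_def)

lemma counitL: "lf f \<Longrightarrow> swl (D h) (\<lambda>x y. e x * f y) = f h"
proof -
  assume f: "lf f"
  have "f h = f (sum_list (map (\<lambda>(x, y). sc (e x) y) (D h)))"
    using hopf by (simp add: hopf_algebra_def)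
  also have "\<dots> = swl (D h) (\<lambda>x y. e x * f y)"
    by (simp add: lf_sum_map[OF f] swl_def lf_sc_D[OF f])
  finally show ?thesis by simp
qed

lemma counitR: "lf f \<Longrightarrow> swl (D h) (\<lambda>x y. f x * e y) = f h"
proof -
  assume f: "lf f"
  have "f h = f (sum_list (map (\<lambda>(x, y). sc (e y) x) (D h)))"
    using hopf by (simp add: hopf_algebra_def)
  also have "\<dots> = swl (D h) (\<lambda>x y. f x * e y)"
    by (simp add: lf_sum_map[OF f] swl_def lf_sc_D[OF f] mult.commute)
  finally show ?thesis by simp
qed

lemma antipL: "lf f \<Longrightarrow> swl (D h) (\<lambda>x y. f (S x * y)) = e h * f 1"
proof -
  assume f: "lf f"
  have "e h * f 1 = f (sum_list (map (\<lambda>(x, y). S x * y) (D h)))"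
    using hopf by (simp add: hopf_algebra_def lf_sc_D[OF f])
  also have "\<dots> = swl (D h) (\<lambda>x y. f (S x * y))"
    by (simp add: lf_sum_map[OF f] swl_def)
  finally show ?thesis by simp
qed

lemma antipR: "lf f \<Longrightarrow> swl (D h) (\<lambda>x y. f (x * S y)) = e h * f 1"
proof -
  assume f: "lf f"
  have "e h * f 1 = f (sum_list (map (\<lambda>(x, y). x * S y) (D h)))"
    using hopf by (simp add: hopf_algebra_def lf_sc_D[OF f])
  also have "\<dots> = swl (D h) (\<lambda>x y. f (x * S y))"
    by (simp add: lf_sum_map[OF f] swl_def)
  finally show ?thesis by simp
qed

lemma mult: "bil F \<Longrightarrow> swl (D (a * b)) F = swl (D a) (\<lambda>x y. swl (D b) (\<lambda>u v. F (x * u) (y * v)))"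
  using hopf unfolding hopf_algebra_def teq2_iff by (simp add: tmul_def)

lemma unit: "bil F \<Longrightarrow> swl (D 1) F = F 1 1"
  using hopf unfolding hopf_algebra_def teq2_iff by simp

lemmas lfI_rules = lf_add lf_cmul lf_mulc lf_swl lf_DI lf_DI' lf_eI lf_e le_id le_mulc le_cmul le_SI le_S bilI triI

lemma eS: "e (S h) = e h"
proof -
  have "e h = e h * e 1" by (simp add: e_1)
  also have "\<dots> = swl (D h) (\<lambda>x y. e (S x * y))" by (rule antipL[symmetric]) (intro lfI_rules)
  also have "\<dots> = swl (D h) (\<lambda>x y. e (S x) * e y)" by (simp add: e_mult)
  also have "\<dots> = e (S h)" by (rule counitR) (intro lfI_rules)
  finally show ?thesis by simp
qed

lemma Smult: "S (a * b) = S a * S b"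
proof (rule sep)
  fix f assume f: "lf f"
  note R = lfI_rules lf_comp[OF f]
  have i1: "\<And>a1. swl (D b) (\<lambda>b1 b2. f (S (a1*b1)) * e b2) = f (S (a1 * b))"
    by (rule counitR) (intro R)
  have i2: "swl (D a) (\<lambda>a1 a2. f (S (a1*b)) * e a2) = f (S (a * b))"
    by (rule counitR) (intro R)
  have "f (S (a * b)) = swl (D a) (\<lambda>a1 a2. swl (D b) (\<lambda>b1 b2. f (S (a1*b1)) * e b2) * e a2)"
    by (simp add: i1 i2)
  also have "\<dots> = swl (D a) (\<lambda>a1 a2. swl (D b) (\<lambda>b1 b2. e b2 * (e a2 * f (S (a1*b1) * 1 * 1))))"
    by (simp add: swl_cmult swl_multc ac_simps)
  also have "\<dots> = swl (D a) (\<lambda>a1 a2. swl (D b) (\<lambda>b1 b2. e b2 * swl (D a2) (\<lambda>p q. f (S (a1*b1) * (p * S q) * 1))))"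
  proof -
    have "\<And>a1 b1 a2. swl (D a2) (\<lambda>p q. f (S (a1*b1) * (p * S q) * 1)) = e a2 * f (S (a1*b1) * 1 * 1)"
      by (rule antipR[where f = "\<lambda>z. f (S (_ * _) * z * 1)"]) (intro R)
    then show ?thesis by simp
  qed
  also have "\<dots> = swl (D a) (\<lambda>a1 a2. swl (D b) (\<lambda>b1 b2. swl (D a2) (\<lambda>p q. swl (D b2) (\<lambda>r s. f (S (a1*b1) * (p * S q) * (r * S s))))))"
  proof -
    have "\<And>a1 b1 p q b2. swl (D b2) (\<lambda>r s. f (S (a1*b1) * (p * S q) * (r * S s))) = e b2 * f (S (a1*b1) * (p * S q) * 1)"
      by (rule antipR[where f = "\<lambda>z. f (S (_ * _) * (_ * S _) * z)"]) (intro R)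
    then show ?thesis by (simp add: swl_cmult[symmetric])
  qed
  also have "\<dots> = swl (D a) (\<lambda>a1 a2. swl (D a2) (\<lambda>p q. swl (D b) (\<lambda>b1 b2. swl (D b2) (\<lambda>r s. f (S (a1*b1) * (p * S q) * (r * S s))))))"
    by (simp add: swl_swap[of "D b"])
  also have "\<dots> = swl (D a) (\<lambda>x q. swl (D x) (\<lambda>a1 p. swl (D b) (\<lambda>b1 b2. swl (D b2) (\<lambda>r s. f (S (a1*b1) * (p * S q) * (r * S s))))))"
    by (rule coassoc[symmetric]) (intro R)
  also have "\<dots> = swl (D a) (\<lambda>x q. swl (D x) (\<lambda>a1 p. swl (D b) (\<lambda>z s. swl (D z) (\<lambda>b1 r. f (S (a1*b1) * (p * S q) * (r * S s))))))"
  proof -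
    have "\<And>a1 p q. swl (D b) (\<lambda>b1 b2. swl (D b2) (\<lambda>r s. f (S (a1*b1) * (p * S q) * (r * S s))))
       = swl (D b) (\<lambda>z s. swl (D z) (\<lambda>b1 r. f (S (a1*b1) * (p * S q) * (r * S s))))"
      by (rule coassoc[symmetric]) (intro R)
    then show ?thesis by simp
  qed
  also have "\<dots> = swl (D a) (\<lambda>x q. swl (D b) (\<lambda>z s. swl (D x) (\<lambda>a1 p. swl (D z) (\<lambda>b1 r. f (S (a1*b1) * (p * S q) * (r * S s))))))"
    by (subst swl_swap, rule refl)
  also have "\<dots> = swl (D a) (\<lambda>x q. swl (D b) (\<lambda>z s. swl (D x) (\<lambda>a1 p. swl (D z) (\<lambda>b1 r. f (S (a1*b1) * (p * r) * (S q * S s))))))"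
    by (simp add: ac_simps)
  also have "\<dots> = swl (D a) (\<lambda>x q. swl (D b) (\<lambda>z s. swl (D (x * z)) (\<lambda>u v. f (S u * v * (S q * S s)))))"
  proof -
    have "\<And>x z q s. swl (D (x * z)) (\<lambda>u v. f (S u * v * (S q * S s))) = swl (D x) (\<lambda>a1 p. swl (D z) (\<lambda>b1 r. f (S (a1*b1) * (p * r) * (S q * S s))))"
      by (rule mult) (intro R)
    then show ?thesis by simp
  qed
  also have "\<dots> = swl (D a) (\<lambda>x q. swl (D b) (\<lambda>z s. e (x * z) * f (1 * (S q * S s))))"
  proof -
    have "\<And>x z q s. swl (D (x * z)) (\<lambda>u v. f (S u * v * (S q * S s))) = e (x * z) * f (1 * (S q * S s))"
      by (rule antipL[where f = "\<lambda>w. f (w * (S _ * S _))"]) (intro R)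
    then show ?thesis by simp
  qed
  also have "\<dots> = swl (D a) (\<lambda>x q. e x * swl (D b) (\<lambda>z s. e z * f (S q * S s)))"
    by (simp add: e_mult swl_cmult ac_simps)
  also have "\<dots> = swl (D a) (\<lambda>x q. e x * f (S q * S b))"
  proof -
    have "\<And>q. swl (D b) (\<lambda>z s. e z * f (S q * S s)) = f (S q * S b)"
      by (rule counitL) (intro R)
    then show ?thesis by simp
  qed
  also have "\<dots> = f (S a * S b)"
    by (rule counitL) (intro R)
  finally show "f (S (a * b)) = f (S a * S b)" .
qed
lemma S1: "S 1 = 1"
proof (rule sep)
  fix f assume f: "lf f"
  note R = lfI_rules lf_comp[OF f]
  have "f (S 1) = swl (D 1) (\<lambda>x y. f (S x * y))"
    by (subst unit) (intro R, simp)
  also have "\<dots> = f 1" by (subst antipL) (intro R, simp add: e_1)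
  finally show "f (S 1) = f 1" .
qed

end


locale brace = kalg sc for sc :: "'k::field \<Rightarrow> 'a::comm_ring_1 \<Rightarrow> 'a" +
  fixes D :: "'a \<Rightarrow> ('a \<times> 'a) list" and e :: "'a \<Rightarrow> 'k" and S :: "'a \<Rightarrow> 'a"
    and D' :: "'a \<Rightarrow> ('a \<times> 'a) list" and e' :: "'a \<Rightarrow> 'k" and T :: "'a \<Rightarrow> 'a"
  assumes br: "hopf_brace sc D e S D' e' T"
begin

sublocale H: hopf sc D e S using br kalg by unfold_locales (simp add: hopf_brace_def)
sublocale H': hopf sc D' e' T using br kalg by unfold_locales (simp add: hopf_brace_def)

lemmas push = swl_cmult[symmetric] swl_multc[symmetric]

lemmas R0 = H.lfI_rules H'.lf_DI H'.lf_DI' H'.lf_eI H'.lf_e H'.le_SI H'.le_S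

lemma HB: "tri G \<Longrightarrow> swl (D' h) (\<lambda>x y. swl (D y) (\<lambda>u v. G x u v)) =
  swl (D h) (\<lambda>h1 r. swl (D r) (\<lambda>h2 h3. swl (D' h1) (\<lambda>p q. swl (D' h3) (\<lambda>r' s. G (p * S h2 * r') q s))))"
  using br unfolding hopf_brace_def teq3_iff by (simp add: copR_def)

lemma eSe: "e h = e' (S h)"
proof -
  note R = R0
  have "e h = swl (D' h) (\<lambda>x y. e' x * e y)" by (rule H'.counitL[symmetric]) (intro R)
  also have "\<dots> = swl (D' h) (\<lambda>x y. swl (D y) (\<lambda>u v. e' x * e u * e v))"
  proof -
    have "\<And>y. swl (D y) (\<lambda>u v. e u * e v) = e y" by (rule H.counitL) (intro R)
    then show ?thesis by (simp add: mult.assoc swl_cmult)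
  qed
  also have "\<dots> = swl (D h) (\<lambda>h1 r. swl (D r) (\<lambda>h2 h3. swl (D' h1) (\<lambda>p q. swl (D' h3) (\<lambda>r' s. e' (p * S h2 * r') * e q * e s))))"
    by (rule HB) (intro R)
  also have "\<dots> = swl (D h) (\<lambda>h1 r. swl (D r) (\<lambda>h2 h3. e' (S h2) * (swl (D' h1) (\<lambda>p q. e' p * e q) * swl (D' h3) (\<lambda>r' s. e' r' * e s))))"
    by (simp only: swl_prod) (simp add: H'.e_mult push ac_simps)
  also have "\<dots> = swl (D h) (\<lambda>h1 r. swl (D r) (\<lambda>h2 h3. e' (S h2) * (e h1 * e h3)))"
  proof -
    have "\<And>y. swl (D' y) (\<lambda>u v. e' u * e v) = e y" by (rule H'.counitL) (intro R)
    then show ?thesis by simp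
  qed
  also have "\<dots> = swl (D h) (\<lambda>h1 r. e h1 * swl (D r) (\<lambda>h2 h3. e' (S h2) * e h3))"
    by (simp add: push ac_simps)
  also have "\<dots> = swl (D h) (\<lambda>h1 r. e h1 * e' (S r))"
  proof -
    have "\<And>y. swl (D y) (\<lambda>u v. e' (S u) * e v) = e' (S y)" by (rule H.counitR) (intro R)
    then show ?thesis by simp
  qed
  also have "\<dots> = e' (S h)" by (rule H.counitL) (intro R)
  finally show ?thesis .
qed

lemma e'_eq: "e' = e"
proof
  fix h
  note R = R0
  have "e' h = swl (D h) (\<lambda>x y. e' x * e y)" by (rule H.counitR[symmetric]) (intro R)
  also have "\<dots> = swl (D h) (\<lambda>x y. e' (x * S y))" by (simp add: eSe H'.e_mult)
  also have "\<dots> = e h * e' 1" by (rule H.antipR) (intro R)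
  finally show "e' h = e h" by (simp add: H'.e_1)
qed

lemmas C'L = H'.counitL[unfolded e'_eq]
lemmas C'R = H'.counitR[unfolded e'_eq]
lemmas A'L = H'.antipL[unfolded e'_eq]
lemmas A'R = H'.antipR[unfolded e'_eq]
lemmas CL = H.counitL
lemmas CR = H.counitR
lemmas AL = H.antipL
lemmas AR = H.antipR

abbreviation rho where "rho \<equiv> brace_rho D S D'"

lemma swl_rho: "swl (rho a) F = swl (D a) (\<lambda>x y. swl (D' y) (\<lambda>u v. F (S x * u) v))"
  by (simp add: brace_rho_def)

lemma lf_rho: "bil F \<Longrightarrow> lf (\<lambda>a. swl (rho a) F)"
proof -
  assume b: "bil F"
  show ?thesis unfolding swl_rho by (intro R0 lf_bil1[OF b] lf_bil2[OF b])
qed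

lemma rho_lin: "lin_to_tensor sc rho"
  unfolding lin_to_tensor_def teq2_iff
proof (intro allI impI conjI)
  fix x y and \<beta> :: "'a \<Rightarrow> 'a \<Rightarrow> 'k" assume b: "bil \<beta>"
  show "swl (rho (x + y)) \<beta> = swl (rho x @ rho y) \<beta>"
    using lf_add_D[OF lf_rho[OF b]] by simp
next
  fix c x and \<beta> :: "'a \<Rightarrow> 'a \<Rightarrow> 'k" assume b: "bil \<beta>"
  have "\<And>u v. \<beta> (sc c u) v = c * \<beta> u v"
    using b unfolding bil_def by (metis lf_sc_D)
  then show "swl (rho (sc c x)) \<beta> = swl (map (\<lambda>(u, v). (sc c u, v)) (rho x)) \<beta>"
    using lf_sc_D[OF lf_rho[OF b]] by (simp add: swl_cmult)
qed

lemma lf_rhoI: "bil F \<Longrightarrow> le g \<Longrightarrow> lf (\<lambda>x. swl (rho (g x)) F)"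
  by (rule lf_tensor[OF rho_lin])
lemma lf_rhoI': "bil F \<Longrightarrow> lf (\<lambda>x. swl (rho x) F)"
  using lf_rhoI[of F "\<lambda>x. x"] le_id by simp

lemmas R1 = R0 lf_rhoI lf_rhoI'

lemma rho_F1: "bil \<beta> \<Longrightarrow> swl (D' h) \<beta> = swl (D h) (\<lambda>h1 h2. swl (rho h2) (\<lambda>w z. \<beta> (h1 * w) z))"
proof -
  assume b: "bil \<beta>"
  note R = R1 lf_bil1[OF b] lf_bil2[OF b]
  have "swl (D' h) \<beta> = swl (D' h) (\<lambda>x y. swl (D y) (\<lambda>u v. e u * \<beta> x v))"
  proof -
    have "\<And>x y. swl (D y) (\<lambda>u v. e u * \<beta> x v) = \<beta> x y" by (rule CL) (intro R)
    then show ?thesis by simp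
  qed
  also have "\<dots> = swl (D h) (\<lambda>h1 r. swl (D r) (\<lambda>h2 h3. swl (D' h1) (\<lambda>p q. swl (D' h3) (\<lambda>r' s. e q * \<beta> (p * S h2 * r') s))))"
    by (rule HB) (intro R)
  also have "\<dots> = swl (D h) (\<lambda>h1 r. swl (D r) (\<lambda>h2 h3. swl (D' h3) (\<lambda>r' s. swl (D' h1) (\<lambda>p q. e q * \<beta> (p * S h2 * r') s))))"
  proof -
    have "\<And>h1 h2 h3. swl (D' h1) (\<lambda>p q. swl (D' h3) (\<lambda>r' s. e q * \<beta> (p * S h2 * r') s))
       = swl (D' h3) (\<lambda>r' s. swl (D' h1) (\<lambda>p q. e q * \<beta> (p * S h2 * r') s))" by (rule swl_swap)
    then show ?thesis by simp
  qed
  also have "\<dots> = swl (D h) (\<lambda>h1 r. swl (D r) (\<lambda>h2 h3. swl (D' h3) (\<lambda>r' s. \<beta> (h1 * S h2 * r') s)))"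
  proof -
    have "\<And>h1 h2 r' s. swl (D' h1) (\<lambda>p q. \<beta> (p * S h2 * r') s * e q) = \<beta> (h1 * S h2 * r') s" by (rule C'R) (intro R)
    then show ?thesis by (simp add: mult.commute)
  qed
  also have "\<dots> = swl (D h) (\<lambda>h1 h2. swl (rho h2) (\<lambda>w z. \<beta> (h1 * w) z))"
    by (simp add: swl_rho mult.assoc)
  finally show ?thesis .
qed

lemma rho_F3: "tri \<gamma> \<Longrightarrow> swl (rho a) (\<lambda>w z. swl (D z) (\<lambda>u v. \<gamma> w u v)) =
   swl (D a) (\<lambda>a1 a2. swl (rho a1) (\<lambda>w1 z1. swl (rho a2) (\<lambda>w2 z2. \<gamma> (w1 * w2) z1 z2)))"
proof -
  assume g: "tri \<gamma>"
  note R = R1 lf_tri1[OF g] lf_tri2[OF g] lf_tri3[OF g]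
  have "swl (rho a) (\<lambda>w z. swl (D z) (\<lambda>u v. \<gamma> w u v))
     = swl (D a) (\<lambda>x y. swl (D' y) (\<lambda>p z. swl (D z) (\<lambda>u v. \<gamma> (S x * p) u v)))"
    by (simp add: swl_rho)
  also have "\<dots> = swl (D a) (\<lambda>x y. swl (D y) (\<lambda>h1 r. swl (D r) (\<lambda>h2 h3. swl (D' h1) (\<lambda>p q. swl (D' h3) (\<lambda>r' s. \<gamma> (S x * (p * S h2 * r')) q s)))))"
  proof -
    have "\<And>x y. swl (D' y) (\<lambda>p z. swl (D z) (\<lambda>u v. \<gamma> (S x * p) u v)) =
      swl (D y) (\<lambda>h1 r. swl (D r) (\<lambda>h2 h3. swl (D' h1) (\<lambda>p q. swl (D' h3) (\<lambda>r' s. \<gamma> (S x * (p * S h2 * r')) q s))))"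
      by (rule HB) (intro R)
    then show ?thesis by simp
  qed
  also have "\<dots> = swl (D a) (\<lambda>x y. swl (D y) (\<lambda>h1 r. swl (D r) (\<lambda>h2 h3. swl (D' h1) (\<lambda>p q. swl (D' h3) (\<lambda>r' s. \<gamma> (S x * p * (S h2 * r')) q s)))))"
    by (simp add: ac_simps)
  also have "\<dots> = swl (D a) (\<lambda>x y. swl (D y) (\<lambda>h1 r. swl (D' h1) (\<lambda>p q. swl (D r) (\<lambda>h2 h3. swl (D' h3) (\<lambda>r' s. \<gamma> (S x * p * (S h2 * r')) q s)))))"
  proof -
    have "\<And>x h1 r. swl (D r) (\<lambda>h2 h3. swl (D' h1) (\<lambda>p q. swl (D' h3) (\<lambda>r' s. \<gamma> (S x * p * (S h2 * r')) q s)))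
      = swl (D' h1) (\<lambda>p q. swl (D r) (\<lambda>h2 h3. swl (D' h3) (\<lambda>r' s. \<gamma> (S x * p * (S h2 * r')) q s)))"
      by (rule swl_swap)
    then show ?thesis by simp
  qed
  also have "\<dots> = swl (D a) (\<lambda>a1 a2. swl (D a1) (\<lambda>x y. swl (D' y) (\<lambda>p q. swl (D a2) (\<lambda>h2 h3. swl (D' h3) (\<lambda>r' s. \<gamma> (S x * p * (S h2 * r')) q s)))))"
    by (rule H.coassoc[symmetric]) (intro R)
  also have "\<dots> = swl (D a) (\<lambda>a1 a2. swl (rho a1) (\<lambda>w1 z1. swl (rho a2) (\<lambda>w2 z2. \<gamma> (w1 * w2) z1 z2)))"
    by (simp add: swl_rho)
  finally show ?thesis .
qed

lemma rho_mult: "bil \<beta> \<Longrightarrow> swl (rho (a * b)) \<beta> = swl (rho a) (\<lambda>x y. swl (rho b) (\<lambda>u v. \<beta> (x * u) (y * v)))"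
proof -
  assume b: "bil \<beta>"
  note R = R1 lf_bil1[OF b] lf_bil2[OF b]
  have "swl (rho (a * b)) \<beta> = swl (D (a * b)) (\<lambda>x y. swl (D' y) (\<lambda>u v. \<beta> (S x * u) v))"
    by (simp add: swl_rho)
  also have "\<dots> = swl (D a) (\<lambda>x1 y1. swl (D b) (\<lambda>x2 y2. swl (D' (y1 * y2)) (\<lambda>u v. \<beta> (S (x1 * x2) * u) v)))"
    by (rule H.mult) (intro R)
  also have "\<dots> = swl (D a) (\<lambda>x1 y1. swl (D b) (\<lambda>x2 y2. swl (D' y1) (\<lambda>u1 v1. swl (D' y2) (\<lambda>u2 v2. \<beta> (S (x1 * x2) * (u1 * u2)) (v1 * v2)))))"
  proof -
    have "\<And>x1 x2 y1 y2. swl (D' (y1 * y2)) (\<lambda>u v. \<beta> (S (x1 * x2) * u) v) = swl (D' y1) (\<lambda>u1 v1. swl (D' y2) (\<lambda>u2 v2. \<beta> (S (x1 * x2) * (u1 * u2)) (v1 * v2)))"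
      by (rule H'.mult) (intro R)
    then show ?thesis by simp
  qed
  also have "\<dots> = swl (D a) (\<lambda>x1 y1. swl (D' y1) (\<lambda>u1 v1. swl (D b) (\<lambda>x2 y2. swl (D' y2) (\<lambda>u2 v2. \<beta> (S (x1 * x2) * (u1 * u2)) (v1 * v2)))))"
  proof -
    have "\<And>x1 y1. swl (D b) (\<lambda>x2 y2. swl (D' y1) (\<lambda>u1 v1. swl (D' y2) (\<lambda>u2 v2. \<beta> (S (x1 * x2) * (u1 * u2)) (v1 * v2))))
     = swl (D' y1) (\<lambda>u1 v1. swl (D b) (\<lambda>x2 y2. swl (D' y2) (\<lambda>u2 v2. \<beta> (S (x1 * x2) * (u1 * u2)) (v1 * v2))))"
      by (rule swl_swap)
    then show ?thesis by simp
  qed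
  also have "\<dots> = swl (rho a) (\<lambda>x y. swl (rho b) (\<lambda>u v. \<beta> (x * u) (y * v)))"
    by (simp add: swl_rho H.Smult ac_simps)
  finally show ?thesis .
qed

lemma rho_unit: "bil \<beta> \<Longrightarrow> swl (rho 1) \<beta> = \<beta> 1 1"
proof -
  assume b: "bil \<beta>"
  note R = R1 lf_bil1[OF b] lf_bil2[OF b]
  have "swl (rho 1) \<beta> = swl (D 1) (\<lambda>x y. swl (D' y) (\<lambda>u v. \<beta> (S x * u) v))"
    by (simp add: swl_rho)
  also have "\<dots> = swl (D' 1) (\<lambda>u v. \<beta> (S 1 * u) v)"
    by (rule H.unit) (intro R)
  also have "\<dots> = \<beta> 1 1"
    by (subst H'.unit) (intro R, simp add: H.S1)
  finally show ?thesis .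
qed

lemma rho_counit: "lf f \<Longrightarrow> swl (rho a) (\<lambda>w z. e w * f z) = f a"
proof -
  assume f: "lf f"
  note R = R1 lf_comp[OF f]
  have "swl (rho a) (\<lambda>w z. e w * f z) = swl (D a) (\<lambda>x y. e (S x) * swl (D' y) (\<lambda>u v. e u * f v))"
    by (simp add: swl_rho H.e_mult swl_cmult mult.assoc)
  also have "\<dots> = swl (D a) (\<lambda>x y. e x * f y)"
  proof -
    have "\<And>y. swl (D' y) (\<lambda>u v. e u * f v) = f y" by (rule C'L) (intro R)
    then show ?thesis by (simp add: H.eS)
  qed
  also have "\<dots> = f a" by (rule CL) (intro R)
  finally show ?thesis .
qed

lemma rho_counit2: "lf f \<Longrightarrow> swl (rho a) (\<lambda>w z. f w * e z) = e a * f 1"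
proof -
  assume f: "lf f"
  note R = R1 lf_comp[OF f]
  have "swl (rho a) (\<lambda>w z. f w * e z) = swl (D a) (\<lambda>x y. swl (D' y) (\<lambda>u v. f (S x * u) * e v))"
    by (simp add: swl_rho)
  also have "\<dots> = swl (D a) (\<lambda>x y. f (S x * y))"
  proof -
    have "\<And>x y. swl (D' y) (\<lambda>u v. f (S x * u) * e v) = f (S x * y)" by (rule C'R) (intro R)
    then show ?thesis by simp
  qed
  also have "\<dots> = e a * f 1" by (rule AL) (intro R)
  finally show ?thesis .
qed

lemma expand_X:
  fixes X :: "'a \<Rightarrow> ('a \<Rightarrow> 'a \<Rightarrow> 'a \<Rightarrow> 'k) \<Rightarrow> 'k"
  assumes X: "tri (\<lambda>p q h. X h (\<lambda>x y z. \<gamma> (p * x) (q * y) z))"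
  shows "X a \<gamma> = swl (D a) (\<lambda>a1 r. swl (D' (S a1)) (\<lambda>p1 q1. swl (D r) (\<lambda>a2 a3. swl (D' a2) (\<lambda>p2 q2.
      X a3 (\<lambda>x y z. \<gamma> (p1 * (p2 * x)) (q1 * (q2 * y)) z)))))"
proof -
  define \<Phi> where "\<Phi> p q h = X h (\<lambda>x y z. \<gamma> (p * x) (q * y) z)" for p q h
  have tP: "tri \<Phi>" unfolding \<Phi>_def by (rule X)
  note R = R1 lf_tri1[OF tP] lf_tri2[OF tP] lf_tri3[OF tP]
  have "X a \<gamma> = \<Phi> 1 1 a" by (simp add: \<Phi>_def)
  also have "\<dots> = swl (D a) (\<lambda>y a3. e y * \<Phi> 1 1 a3)"
    by (rule CL[symmetric]) (intro R)
  also have "\<dots> = swl (D a) (\<lambda>y a3. swl (D y) (\<lambda>a1 a2. swl (D' (S a1 * a2)) (\<lambda>p q. \<Phi> p q a3)))"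
  proof -
    have "\<And>y a3. swl (D y) (\<lambda>a1 a2. swl (D' (S a1 * a2)) (\<lambda>p q. \<Phi> p q a3)) = e y * swl (D' 1) (\<lambda>p q. \<Phi> p q a3)"
      by (rule AL) (intro R)
    moreover have "\<And>a3. swl (D' 1) (\<lambda>p q. \<Phi> p q a3) = \<Phi> 1 1 a3"
      by (rule H'.unit) (intro R)
    ultimately show ?thesis by simp
  qed
  also have "\<dots> = swl (D a) (\<lambda>a1 r. swl (D r) (\<lambda>a2 a3. swl (D' (S a1 * a2)) (\<lambda>p q. \<Phi> p q a3)))"
    by (rule H.coassoc) (intro R)
  also have "\<dots> = swl (D a) (\<lambda>a1 r. swl (D r) (\<lambda>a2 a3. swl (D' (S a1)) (\<lambda>p1 q1. swl (D' a2) (\<lambda>p2 q2. \<Phi> (p1 * p2) (q1 * q2) a3))))"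
  proof -
    have "\<And>a1 a2 a3. swl (D' (S a1 * a2)) (\<lambda>p q. \<Phi> p q a3) = swl (D' (S a1)) (\<lambda>p1 q1. swl (D' a2) (\<lambda>p2 q2. \<Phi> (p1 * p2) (q1 * q2) a3))"
      by (rule H'.mult) (intro R)
    then show ?thesis by simp
  qed
  also have "\<dots> = swl (D a) (\<lambda>a1 r. swl (D' (S a1)) (\<lambda>p1 q1. swl (D r) (\<lambda>a2 a3. swl (D' a2) (\<lambda>p2 q2. \<Phi> (p1 * p2) (q1 * q2) a3))))"
  proof -
    have "\<And>a1 r. swl (D r) (\<lambda>a2 a3. swl (D' (S a1)) (\<lambda>p1 q1. swl (D' a2) (\<lambda>p2 q2. \<Phi> (p1 * p2) (q1 * q2) a3)))
       = swl (D' (S a1)) (\<lambda>p1 q1. swl (D r) (\<lambda>a2 a3. swl (D' a2) (\<lambda>p2 q2. \<Phi> (p1 * p2) (q1 * q2) a3)))"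
      by (rule swl_swap)
    then show ?thesis by simp
  qed
  also have "\<dots> = swl (D a) (\<lambda>a1 r. swl (D' (S a1)) (\<lambda>p1 q1. swl (D r) (\<lambda>a2 a3. swl (D' a2) (\<lambda>p2 q2.
      X a3 (\<lambda>x y z. \<gamma> (p1 * (p2 * x)) (q1 * (q2 * y)) z)))))"
    by (simp add: \<Phi>_def mult.assoc)
  finally show ?thesis .
qed

lemma cancel_X:
  fixes X Y :: "'a \<Rightarrow> ('a \<Rightarrow> 'a \<Rightarrow> 'a \<Rightarrow> 'k) \<Rightarrow> 'k"
  assumes X: "tri (\<lambda>p q h. X h (\<lambda>x y z. \<gamma> (p * x) (q * y) z))"
    and Y: "tri (\<lambda>p q h. Y h (\<lambda>x y z. \<gamma> (p * x) (q * y) z))"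
    and XY: "\<And>h \<gamma>. tri \<gamma> \<Longrightarrow> swl (D h) (\<lambda>h1 h2. swl (D' h1) (\<lambda>p q. X h2 (\<lambda>x y z. \<gamma> (p * x) (q * y) z)))
               = swl (D h) (\<lambda>h1 h2. swl (D' h1) (\<lambda>p q. Y h2 (\<lambda>x y z. \<gamma> (p * x) (q * y) z)))"
    and g: "tri \<gamma>"
  shows "X a \<gamma> = Y a \<gamma>"
proof -
  have "\<And>p1 q1 r. swl (D r) (\<lambda>a2 a3. swl (D' a2) (\<lambda>p2 q2. X a3 (\<lambda>x y z. \<gamma> (p1 * (p2 * x)) (q1 * (q2 * y)) z)))
    = swl (D r) (\<lambda>a2 a3. swl (D' a2) (\<lambda>p2 q2. Y a3 (\<lambda>x y z. \<gamma> (p1 * (p2 * x)) (q1 * (q2 * y)) z)))"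
  proof -
    fix p1 q1 r
    have t: "tri (\<lambda>x y z. \<gamma> (p1 * x) (q1 * y) z)"
      by (intro triI lf_tri1[OF g] lf_tri2[OF g] lf_tri3[OF g] le_cmul le_id)
    show "?thesis p1 q1 r" using XY[OF t, of r] by simp
  qed
  note eq = this
  show ?thesis
    apply (subst expand_X[OF X])
    apply (subst expand_X[OF Y])
    apply (simp only: eq)
    done
qed

abbreviation rX where "rX a \<gamma> \<equiv> swl (rho a) (\<lambda>w z. swl (D' w) (\<lambda>p q. \<gamma> p q z))"
abbreviation rY where "rY a \<gamma> \<equiv> swl (rho a) (\<lambda>w z. swl (rho z) (\<lambda>p q. \<gamma> w p q))"

lemma rho_alphaL: "tri \<gamma> \<Longrightarrow> swl (D' h) (\<lambda>x y. swl (D' x) (\<lambda>p q. \<gamma> p q y)) =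
   swl (D h) (\<lambda>h1 h2. swl (D' h1) (\<lambda>p q. rX h2 (\<lambda>x y z. \<gamma> (p * x) (q * y) z)))"
proof -
  assume g: "tri \<gamma>"
  note R = R1 lf_tri1[OF g] lf_tri2[OF g] lf_tri3[OF g]
  have "swl (D' h) (\<lambda>x y. swl (D' x) (\<lambda>p q. \<gamma> p q y)) =
     swl (D h) (\<lambda>h1 h2. swl (rho h2) (\<lambda>w z. swl (D' (h1 * w)) (\<lambda>p q. \<gamma> p q z)))"
    by (rule rho_F1) (intro R)
  also have "\<dots> = swl (D h) (\<lambda>h1 h2. swl (rho h2) (\<lambda>w z. swl (D' h1) (\<lambda>p1 q1. swl (D' w) (\<lambda>p2 q2. \<gamma> (p1 * p2) (q1 * q2) z))))"
  proof -
    have "\<And>h1 w z. swl (D' (h1 * w)) (\<lambda>p q. \<gamma> p q z) = swl (D' h1) (\<lambda>p1 q1. swl (D' w) (\<lambda>p2 q2. \<gamma> (p1 * p2) (q1 * q2) z))"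
      by (rule H'.mult) (intro R)
    then show ?thesis by simp
  qed
  also have "\<dots> = swl (D h) (\<lambda>h1 h2. swl (D' h1) (\<lambda>p1 q1. swl (rho h2) (\<lambda>w z. swl (D' w) (\<lambda>p2 q2. \<gamma> (p1 * p2) (q1 * q2) z))))"
  proof -
    have "\<And>h1 h2. swl (rho h2) (\<lambda>w z. swl (D' h1) (\<lambda>p1 q1. swl (D' w) (\<lambda>p2 q2. \<gamma> (p1 * p2) (q1 * q2) z)))
      = swl (D' h1) (\<lambda>p1 q1. swl (rho h2) (\<lambda>w z. swl (D' w) (\<lambda>p2 q2. \<gamma> (p1 * p2) (q1 * q2) z)))"
      by (rule swl_swap)
    then show ?thesis by simp
  qed
  finally show ?thesis .
qed

lemma rho_alphaR: "tri \<gamma> \<Longrightarrow> swl (D' h) (\<lambda>x y. swl (D' y) (\<lambda>q z. \<gamma> x q z)) =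
   swl (D h) (\<lambda>h1 h2. swl (D' h1) (\<lambda>p q. rY h2 (\<lambda>x y z. \<gamma> (p * x) (q * y) z)))"
proof -
  assume g: "tri \<gamma>"
  note R = R1 lf_tri1[OF g] lf_tri2[OF g] lf_tri3[OF g]
  have "swl (D' h) (\<lambda>x y. swl (D' y) (\<lambda>q z. \<gamma> x q z)) =
     swl (D h) (\<lambda>h1 h2. swl (rho h2) (\<lambda>w y. swl (D' y) (\<lambda>q z. \<gamma> (h1 * w) q z)))"
    by (rule rho_F1) (intro R)
  also have "\<dots> = swl (D h) (\<lambda>h1 h2. swl (rho h2) (\<lambda>w y. swl (D y) (\<lambda>y1 y2. swl (rho y2) (\<lambda>w' z. \<gamma> (h1 * w) (y1 * w') z))))"
  proof -
    have "\<And>h1 w y. swl (D' y) (\<lambda>q z. \<gamma> (h1 * w) q z) = swl (D y) (\<lambda>y1 y2. swl (rho y2) (\<lambda>w' z. \<gamma> (h1 * w) (y1 * w') z))"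
      by (rule rho_F1) (intro R)
    then show ?thesis by simp
  qed
  also have "\<dots> = swl (D h) (\<lambda>h1 h2. swl (D h2) (\<lambda>a1 a2. swl (rho a1) (\<lambda>w1 z1. swl (rho a2) (\<lambda>w2 z2. swl (rho z2) (\<lambda>w' z. \<gamma> (h1 * (w1 * w2)) (z1 * w') z)))))"
  proof -
    have "\<And>h1 h2. swl (rho h2) (\<lambda>w y. swl (D y) (\<lambda>y1 y2. swl (rho y2) (\<lambda>w' z. \<gamma> (h1 * w) (y1 * w') z)))
      = swl (D h2) (\<lambda>a1 a2. swl (rho a1) (\<lambda>w1 z1. swl (rho a2) (\<lambda>w2 z2. swl (rho z2) (\<lambda>w' z. \<gamma> (h1 * (w1 * w2)) (z1 * w') z))))"
      by (rule rho_F3) (intro R)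
    then show ?thesis by simp
  qed
  also have "\<dots> = swl (D h) (\<lambda>t a2. swl (D t) (\<lambda>h1 a1. swl (rho a1) (\<lambda>w1 z1. swl (rho a2) (\<lambda>w2 z2. swl (rho z2) (\<lambda>w' z. \<gamma> (h1 * (w1 * w2)) (z1 * w') z)))))"
    by (rule H.coassoc[symmetric]) (intro R)
  also have "\<dots> = swl (D h) (\<lambda>t a2. swl (D t) (\<lambda>h1 a1. swl (rho a1) (\<lambda>w1 z1. swl (rho a2) (\<lambda>w2 z2. swl (rho z2) (\<lambda>w' z. \<gamma> (h1 * w1 * w2) (z1 * w') z)))))"
    by (simp add: mult.assoc)
  also have "\<dots> = swl (D h) (\<lambda>t a2. swl (D' t) (\<lambda>p q. swl (rho a2) (\<lambda>w2 z2. swl (rho z2) (\<lambda>w' z. \<gamma> (p * w2) (q * w') z))))"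
  proof -
    have "\<And>t a2. swl (D' t) (\<lambda>p q. swl (rho a2) (\<lambda>w2 z2. swl (rho z2) (\<lambda>w' z. \<gamma> (p * w2) (q * w') z)))
     = swl (D t) (\<lambda>h1 a1. swl (rho a1) (\<lambda>w1 z1. swl (rho a2) (\<lambda>w2 z2. swl (rho z2) (\<lambda>w' z. \<gamma> (h1 * w1 * w2) (z1 * w') z))))"
      by (rule rho_F1) (intro R)
    then show ?thesis by simp
  qed
  finally show ?thesis .
qed

lemma rho_coassoc: "tri \<gamma> \<Longrightarrow> rX a \<gamma> = rY a \<gamma>"
proof (rule cancel_X[where X = rX and Y = rY])
  assume g: "tri \<gamma>"
  note R = R1 lf_tri1[OF g] lf_tri2[OF g] lf_tri3[OF g]
  show "tri (\<lambda>p q h. rX h (\<lambda>x y z. \<gamma> (p * x) (q * y) z))" by (intro R)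
  show "tri (\<lambda>p q h. rY h (\<lambda>x y z. \<gamma> (p * x) (q * y) z))" by (intro R)
next
  fix h and \<gamma> :: "'a \<Rightarrow> 'a \<Rightarrow> 'a \<Rightarrow> 'k" assume g: "tri \<gamma>"
  note R = R1 lf_tri1[OF g] lf_tri2[OF g] lf_tri3[OF g]
  show "swl (D h) (\<lambda>h1 h2. swl (D' h1) (\<lambda>p q. rX h2 (\<lambda>x y z. \<gamma> (p * x) (q * y) z))) =
        swl (D h) (\<lambda>h1 h2. swl (D' h1) (\<lambda>p q. rY h2 (\<lambda>x y z. \<gamma> (p * x) (q * y) z)))"
    using rho_alphaL[OF g, of h] rho_alphaR[OF g, of h] H'.coassoc[OF g, of h] by simp
qed

lemma rhoS_c: "bil \<beta> \<Longrightarrow> swl (D a) (\<lambda>a1 a2. swl (rho (S a1)) (\<lambda>w1 z1. swl (rho a2) (\<lambda>w2 z2. \<beta> (w1 * w2) (z1 * z2)))) = e a * \<beta> 1 1"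
proof -
  assume b: "bil \<beta>"
  note R = R1 lf_bil1[OF b] lf_bil2[OF b]
  have "\<And>a1 a2. swl (rho (S a1)) (\<lambda>w1 z1. swl (rho a2) (\<lambda>w2 z2. \<beta> (w1 * w2) (z1 * z2))) = swl (rho (S a1 * a2)) \<beta>"
    by (rule rho_mult[symmetric]) (intro R)
  moreover have "swl (D a) (\<lambda>a1 a2. swl (rho (S a1 * a2)) \<beta>) = e a * swl (rho 1) \<beta>"
    by (rule AL) (intro R)
  ultimately show ?thesis using rho_unit[OF b] by simp
qed

lemma rhoS_b: "bil \<beta> \<Longrightarrow> swl (D a) (\<lambda>a1 a2. swl (rho a1) (\<lambda>w1 z1. swl (rho a2) (\<lambda>w2 z2. \<beta> (w1 * w2) (z1 * S z2)))) = e a * \<beta> 1 1"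
proof -
  assume b: "bil \<beta>"
  note R = R1 lf_bil1[OF b] lf_bil2[OF b]
  have "swl (D a) (\<lambda>a1 a2. swl (rho a1) (\<lambda>w1 z1. swl (rho a2) (\<lambda>w2 z2. \<beta> (w1 * w2) (z1 * S z2))))
    = swl (rho a) (\<lambda>w z. swl (D z) (\<lambda>u v. \<beta> w (u * S v)))"
    by (rule rho_F3[symmetric]) (intro R)
  also have "\<dots> = swl (rho a) (\<lambda>w z. \<beta> w 1 * e z)"
  proof -
    have "\<And>w z. swl (D z) (\<lambda>u v. \<beta> w (u * S v)) = e z * \<beta> w 1" by (rule AR) (intro R)
    then show ?thesis by (simp add: mult.commute)
  qed
  also have "\<dots> = e a * \<beta> 1 1" by (rule rho_counit2) (intro R)
  finally show ?thesis .
qed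

lemma rho_S: "bil \<beta> \<Longrightarrow> swl (rho a) (\<lambda>w z. \<beta> w (S z)) = swl (rho (S a)) \<beta>"
proof -
  assume b: "bil \<beta>"
  note R = R1 lf_bil1[OF b] lf_bil2[OF b]
  define \<Psi> where "\<Psi> p q h = swl (rho h) (\<lambda>w z. \<beta> (p * w) (q * S z))" for p q h
  have tP: "tri \<Psi>" unfolding \<Psi>_def by (intro R)
  note R = R lf_tri1[OF tP] lf_tri2[OF tP] lf_tri3[OF tP]
  have "swl (rho a) (\<lambda>w z. \<beta> w (S z)) = \<Psi> 1 1 a" by (simp add: \<Psi>_def)
  also have "\<dots> = swl (D a) (\<lambda>y a3. e y * \<Psi> 1 1 a3)" by (rule CL[symmetric]) (intro R)
  also have "\<dots> = swl (D a) (\<lambda>y a3. swl (D y) (\<lambda>a1 a2. swl (rho (S a1)) (\<lambda>w1 z1. swl (rho a2) (\<lambda>w2 z2. \<Psi> (w1 * w2) (z1 * z2) a3))))"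
  proof -
    have "\<And>y a3. swl (D y) (\<lambda>a1 a2. swl (rho (S a1)) (\<lambda>w1 z1. swl (rho a2) (\<lambda>w2 z2. \<Psi> (w1 * w2) (z1 * z2) a3))) = e y * \<Psi> 1 1 a3"
      by (rule rhoS_c) (intro R)
    then show ?thesis by simp
  qed
  also have "\<dots> = swl (D a) (\<lambda>a1 r. swl (D r) (\<lambda>a2 a3. swl (rho (S a1)) (\<lambda>w1 z1. swl (rho a2) (\<lambda>w2 z2. \<Psi> (w1 * w2) (z1 * z2) a3))))"
    by (rule H.coassoc) (intro R)
  also have "\<dots> = swl (D a) (\<lambda>a1 r. swl (rho (S a1)) (\<lambda>w1 z1. swl (D r) (\<lambda>a2 a3. swl (rho a2) (\<lambda>w2 z2. \<Psi> (w1 * w2) (z1 * z2) a3))))"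
  proof -
    have "\<And>a1 r. swl (D r) (\<lambda>a2 a3. swl (rho (S a1)) (\<lambda>w1 z1. swl (rho a2) (\<lambda>w2 z2. \<Psi> (w1 * w2) (z1 * z2) a3)))
      = swl (rho (S a1)) (\<lambda>w1 z1. swl (D r) (\<lambda>a2 a3. swl (rho a2) (\<lambda>w2 z2. \<Psi> (w1 * w2) (z1 * z2) a3)))"
      by (rule swl_swap)
    then show ?thesis by simp
  qed
  also have "\<dots> = swl (D a) (\<lambda>a1 r. swl (rho (S a1)) (\<lambda>w1 z1. swl (D r) (\<lambda>a2 a3. swl (rho a2) (\<lambda>w2 z2. swl (rho a3) (\<lambda>w z. \<beta> (w1 * (w2 * w)) (z1 * (z2 * S z)))))))"
    by (simp add: \<Psi>_def mult.assoc H.Smult)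
  also have "\<dots> = swl (D a) (\<lambda>a1 r. swl (rho (S a1)) (\<lambda>w1 z1. e r * \<beta> w1 z1))"
  proof -
    have "\<And>w1 z1 r. swl (D r) (\<lambda>a2 a3. swl (rho a2) (\<lambda>w2 z2. swl (rho a3) (\<lambda>w z. \<beta> (w1 * (w2 * w)) (z1 * (z2 * S z)))))
       = e r * \<beta> (w1 * 1) (z1 * 1)"
      by (rule rhoS_b[where \<beta> = "\<lambda>x y. \<beta> (_ * x) (_ * y)", simplified mult.assoc]) (intro R)
    then show ?thesis by simp
  qed
  also have "\<dots> = swl (D a) (\<lambda>a1 r. swl (rho (S a1)) \<beta> * e r)"
    by (simp add: swl_cmult mult.commute)
  also have "\<dots> = swl (rho (S a)) \<beta>"
    by (rule CR) (intro R)
  finally show ?thesis .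
qed

lemma part1: "left_comodule_algebra sc D' e' rho"
  unfolding left_comodule_algebra_def
proof (intro conjI allI)
  show "lin_to_tensor sc rho" by (rule rho_lin)
next
  fix a
  show "teq3 sc (concat (map (\<lambda>(w, v). map (\<lambda>(x, y). (x, y, v)) (D' w)) (rho a)))
                  (concat (map (\<lambda>(w, v). map (\<lambda>(x, y). (w, x, y)) (rho v)) (rho a)))"
    unfolding teq3_iff using rho_coassoc by simp
next
  fix a
  show "sum_list (map (\<lambda>(w, v). sc (e' w) v) (rho a)) = a"
  proof (rule sep)
    fix f assume f: "lf f"
    have "f (sum_list (map (\<lambda>(w, v). sc (e' w) v) (rho a))) = swl (rho a) (\<lambda>w z. e w * f z)"
      by (simp add: lf_sum_map[OF f] swl_def lf_sc_D[OF f] e'_eq)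
    also have "\<dots> = f a" by (rule rho_counit[OF f])
    finally show "f (sum_list (map (\<lambda>(w, v). sc (e' w) v) (rho a))) = f a" .
  qed
next
  fix a b
  show "teq2 sc (rho (a * b)) (tmul (rho a) (rho b))"
    unfolding teq2_iff using rho_mult by (simp add: tmul_def)
next
  show "teq2 sc (rho 1) [(1, 1)]"
    unfolding teq2_iff using rho_unit by simp
qed

lemma part3: "teq2 sc (map (\<lambda>(x, y). (x, S y)) (rho a)) (rho (S a))"
  unfolding teq2_iff using rho_S by simp

end


context brace
begin

abbreviation phi where "phi \<equiv> brace_phi D S D' T"

lemma swl_phi0: "swl (phi a) \<beta> = swl (D' a) (\<lambda>x r. swl (D' r) (\<lambda>y z. swl (rho (T x)) (\<lambda>w v. \<beta> (w * y) (v * z))))"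
  by (simp add: brace_phi_def copR_def swl_rho)

lemma swl_phi: "swl (phi a) \<beta> = swl (D' a) (\<lambda>x r. swl (rho (T x)) (\<lambda>w v. swl (D' r) (\<lambda>y z. \<beta> (w * y) (v * z))))"
proof -
  have "\<And>x r. swl (D' r) (\<lambda>y z. swl (rho (T x)) (\<lambda>w v. \<beta> (w * y) (v * z))) = swl (rho (T x)) (\<lambda>w v. swl (D' r) (\<lambda>y z. \<beta> (w * y) (v * z)))"
    by (rule swl_swap)
  then show ?thesis by (simp add: swl_phi0)
qed

lemmas R2 = R1 H'.le_SI

lemma lf_phi: "bil F \<Longrightarrow> lf (\<lambda>a. swl (phi a) F)"
proof -
  assume b: "bil F"
  show ?thesis unfolding swl_phi by (intro R2 lf_bil1[OF b] lf_bil2[OF b])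
qed

lemma phi_lin: "lin_to_tensor sc phi"
  unfolding lin_to_tensor_def teq2_iff
proof (intro allI impI conjI)
  fix x y and \<beta> :: "'a \<Rightarrow> 'a \<Rightarrow> 'k" assume b: "bil \<beta>"
  show "swl (phi (x + y)) \<beta> = swl (phi x @ phi y) \<beta>"
    using lf_add_D[OF lf_phi[OF b]] by simp
next
  fix c x and \<beta> :: "'a \<Rightarrow> 'a \<Rightarrow> 'k" assume b: "bil \<beta>"
  have "\<And>u v. \<beta> (sc c u) v = c * \<beta> u v"
    using b unfolding bil_def by (metis lf_sc_D)
  then show "swl (phi (sc c x)) \<beta> = swl (map (\<lambda>(u, v). (sc c u, v)) (phi x)) \<beta>"
    using lf_sc_D[OF lf_phi[OF b]] by (simp add: swl_cmult)
qed

lemma lf_phiI: "bil F \<Longrightarrow> le g \<Longrightarrow> lf (\<lambda>x. swl (phi (g x)) F)"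
  by (rule lf_tensor[OF phi_lin])
lemma lf_phiI': "bil F \<Longrightarrow> lf (\<lambda>x. swl (phi x) F)"
  using lf_phiI[of F "\<lambda>x. x"] le_id by simp

lemmas R3 = R2 lf_phiI lf_phiI'

lemma eT: "e (T h) = e h"
  using H'.eS by (simp add: e'_eq)

lemma phi_unit: "bil \<beta> \<Longrightarrow> swl (phi 1) \<beta> = \<beta> 1 1"
proof -
  assume b: "bil \<beta>"
  note R = R3 lf_bil1[OF b] lf_bil2[OF b]
  have "swl (phi 1) \<beta> = swl (rho (T 1)) (\<lambda>w v. swl (D' 1) (\<lambda>y z. \<beta> (w * y) (v * z)))"
    unfolding swl_phi by (rule H'.unit) (intro R)
  also have "\<dots> = swl (rho 1) (\<lambda>w v. \<beta> (w * 1) (v * 1))"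
  proof -
    have "\<And>w v. swl (D' 1) (\<lambda>y z. \<beta> (w * y) (v * z)) = \<beta> (w * 1) (v * 1)"
      by (rule H'.unit) (intro R)
    then show ?thesis by (simp add: H'.S1)
  qed
  also have "\<dots> = \<beta> 1 1" by (subst rho_unit) (intro R, simp)
  finally show ?thesis .
qed

lemma phi_counit: "lf f \<Longrightarrow> swl (phi a) (\<lambda>v w. f v * e w) = f a"
proof -
  assume f: "lf f"
  note R = R3 lf_comp[OF f]
  have "swl (phi a) (\<lambda>v w. f v * e w) = swl (D' a) (\<lambda>x r. swl (rho (T x)) (\<lambda>w v. swl (D' r) (\<lambda>y z. f (w * y) * e z) * e v))"
    by (simp add: swl_phi H.e_mult push ac_simps)
  also have "\<dots> = swl (D' a) (\<lambda>x r. swl (rho (T x)) (\<lambda>w v. f (w * r) * e v))"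
  proof -
    have "\<And>w r. swl (D' r) (\<lambda>y z. f (w * y) * e z) = f (w * r)" by (rule C'R) (intro R)
    then show ?thesis by simp
  qed
  also have "\<dots> = swl (D' a) (\<lambda>x r. e (T x) * f (1 * r))"
  proof -
    have "\<And>x r. swl (rho (T x)) (\<lambda>w v. f (w * r) * e v) = e (T x) * f (1 * r)" by (rule rho_counit2) (intro R)
    then show ?thesis by simp
  qed
  also have "\<dots> = f a" by (simp add: eT) (rule C'L, intro R)
  finally show ?thesis .
qed

lemma phi_mult: "bil \<beta> \<Longrightarrow> swl (phi (a * b)) \<beta> = swl (phi a) (\<lambda>x y. swl (phi b) (\<lambda>u v. \<beta> (x * u) (y * v)))"
proof -
  assume b: "bil \<beta>"
  note R = R3 lf_bil1[OF b] lf_bil2[OF b]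
  have "swl (phi (a * b)) \<beta> = swl (D' a) (\<lambda>x1 r1. swl (D' b) (\<lambda>x2 r2. swl (rho (T (x1 * x2))) (\<lambda>w v. swl (D' (r1 * r2)) (\<lambda>y z. \<beta> (w * y) (v * z)))))"
    unfolding swl_phi by (rule H'.mult) (intro R)
  also have "\<dots> = swl (D' a) (\<lambda>x1 r1. swl (D' b) (\<lambda>x2 r2. swl (rho (T x1)) (\<lambda>w1 v1. swl (rho (T x2)) (\<lambda>w2 v2.
       swl (D' r1) (\<lambda>y1 z1. swl (D' r2) (\<lambda>y2 z2. \<beta> (w1 * w2 * (y1 * y2)) (v1 * v2 * (z1 * z2))))))))"
  proof -
    have "\<And>w v r1 r2. swl (D' (r1 * r2)) (\<lambda>y z. \<beta> (w * y) (v * z)) = swl (D' r1) (\<lambda>y1 z1. swl (D' r2) (\<lambda>y2 z2. \<beta> (w * (y1 * y2)) (v * (z1 * z2))))"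
      by (rule H'.mult) (intro R)
    moreover have "\<And>x1 x2 r1 r2. swl (rho (T x1 * T x2)) (\<lambda>w v. swl (D' r1) (\<lambda>y1 z1. swl (D' r2) (\<lambda>y2 z2. \<beta> (w * (y1 * y2)) (v * (z1 * z2)))))
      = swl (rho (T x1)) (\<lambda>w1 v1. swl (rho (T x2)) (\<lambda>w2 v2. swl (D' r1) (\<lambda>y1 z1. swl (D' r2) (\<lambda>y2 z2. \<beta> (w1 * w2 * (y1 * y2)) (v1 * v2 * (z1 * z2))))))"
      by (rule rho_mult) (intro R)
    ultimately show ?thesis by (simp add: H'.Smult)
  qed
  also have "\<dots> = swl (D' a) (\<lambda>x1 r1. swl (rho (T x1)) (\<lambda>w1 v1. swl (D' b) (\<lambda>x2 r2. swl (rho (T x2)) (\<lambda>w2 v2.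
       swl (D' r1) (\<lambda>y1 z1. swl (D' r2) (\<lambda>y2 z2. \<beta> (w1 * w2 * (y1 * y2)) (v1 * v2 * (z1 * z2))))))))"
    by (simp only: swl_swap[of "D' b"])
  also have "\<dots> = swl (D' a) (\<lambda>x1 r1. swl (rho (T x1)) (\<lambda>w1 v1. swl (D' b) (\<lambda>x2 r2. swl (D' r1) (\<lambda>y1 z1. swl (rho (T x2)) (\<lambda>w2 v2.
       swl (D' r2) (\<lambda>y2 z2. \<beta> (w1 * w2 * (y1 * y2)) (v1 * v2 * (z1 * z2))))))))"
  proof -
    have "\<And>x2 r1 r2 w1 v1. swl (rho (T x2)) (\<lambda>w2 v2. swl (D' r1) (\<lambda>y1 z1. swl (D' r2) (\<lambda>y2 z2. \<beta> (w1 * w2 * (y1 * y2)) (v1 * v2 * (z1 * z2)))))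
      = swl (D' r1) (\<lambda>y1 z1. swl (rho (T x2)) (\<lambda>w2 v2. swl (D' r2) (\<lambda>y2 z2. \<beta> (w1 * w2 * (y1 * y2)) (v1 * v2 * (z1 * z2)))))"
      by (rule swl_swap)
    then show ?thesis by simp
  qed
  also have "\<dots> = swl (D' a) (\<lambda>x1 r1. swl (rho (T x1)) (\<lambda>w1 v1. swl (D' r1) (\<lambda>y1 z1. swl (D' b) (\<lambda>x2 r2. swl (rho (T x2)) (\<lambda>w2 v2.
       swl (D' r2) (\<lambda>y2 z2. \<beta> (w1 * w2 * (y1 * y2)) (v1 * v2 * (z1 * z2))))))))"
    by (simp only: swl_swap[of "D' b"])
  also have "\<dots> = swl (phi a) (\<lambda>x y. swl (phi b) (\<lambda>u v. \<beta> (x * u) (y * v)))"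
    by (simp add: swl_phi ac_simps)
  finally show ?thesis .
qed

lemma phi_i: "bil \<beta> \<Longrightarrow> swl (D' a) \<beta> = swl (D' a) (\<lambda>x y. swl (rho x) (\<lambda>w1 z1. swl (phi y) (\<lambda>w2 z2. \<beta> (w1 * w2) (z1 * z2))))"
proof -
  assume b: "bil \<beta>"
  note R = R3 lf_bil1[OF b] lf_bil2[OF b]
  have "swl (D' a) \<beta> = swl (D' a) (\<lambda>t r. e t * swl (D' r) (\<lambda>y' z. \<beta> y' z))"
    by (rule C'L[symmetric]) (intro R)
  also have "\<dots> = swl (D' a) (\<lambda>t r. e t * swl (rho 1) (\<lambda>p q. swl (D' r) (\<lambda>y' z. \<beta> (p * y') (q * z))))"
  proof -
    have "\<And>r. swl (rho 1) (\<lambda>p q. swl (D' r) (\<lambda>y' z. \<beta> (p * y') (q * z))) = swl (D' r) (\<lambda>y' z. \<beta> (1 * y') (1 * z))"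
      by (rule rho_unit) (intro R)
    then show ?thesis by simp
  qed
  also have "\<dots> = swl (D' a) (\<lambda>t r. swl (D' t) (\<lambda>x x'. swl (rho (x * T x')) (\<lambda>p q. swl (D' r) (\<lambda>y' z. \<beta> (p * y') (q * z)))))"
  proof -
    have "\<And>t r. swl (D' t) (\<lambda>x x'. swl (rho (x * T x')) (\<lambda>p q. swl (D' r) (\<lambda>y' z. \<beta> (p * y') (q * z))))
       = e t * swl (rho 1) (\<lambda>p q. swl (D' r) (\<lambda>y' z. \<beta> (p * y') (q * z)))"
      by (rule A'R) (intro R)
    then show ?thesis by simp
  qed
  also have "\<dots> = swl (D' a) (\<lambda>t r. swl (D' t) (\<lambda>x x'. swl (rho x) (\<lambda>w1 z1. swl (rho (T x')) (\<lambda>w v. swl (D' r) (\<lambda>y' z. \<beta> (w1 * w * y') (z1 * v * z))))))"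
  proof -
    have "\<And>x x' r. swl (rho (x * T x')) (\<lambda>p q. swl (D' r) (\<lambda>y' z. \<beta> (p * y') (q * z)))
      = swl (rho x) (\<lambda>w1 z1. swl (rho (T x')) (\<lambda>w v. swl (D' r) (\<lambda>y' z. \<beta> (w1 * w * y') (z1 * v * z))))"
      by (rule rho_mult) (intro R)
    then show ?thesis by simp
  qed
  also have "\<dots> = swl (D' a) (\<lambda>x y. swl (D' y) (\<lambda>x' r. swl (rho x) (\<lambda>w1 z1. swl (rho (T x')) (\<lambda>w v. swl (D' r) (\<lambda>y' z. \<beta> (w1 * w * y') (z1 * v * z))))))"
    by (rule H'.coassoc) (intro R)
  also have "\<dots> = swl (D' a) (\<lambda>x y. swl (rho x) (\<lambda>w1 z1. swl (D' y) (\<lambda>x' r. swl (rho (T x')) (\<lambda>w v. swl (D' r) (\<lambda>y' z. \<beta> (w1 * w * y') (z1 * v * z))))))"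
  proof -
    have "\<And>x y. swl (D' y) (\<lambda>x' r. swl (rho x) (\<lambda>w1 z1. swl (rho (T x')) (\<lambda>w v. swl (D' r) (\<lambda>y' z. \<beta> (w1 * w * y') (z1 * v * z)))))
      = swl (rho x) (\<lambda>w1 z1. swl (D' y) (\<lambda>x' r. swl (rho (T x')) (\<lambda>w v. swl (D' r) (\<lambda>y' z. \<beta> (w1 * w * y') (z1 * v * z)))))"
      by (rule swl_swap)
    then show ?thesis by simp
  qed
  also have "\<dots> = swl (D' a) (\<lambda>x y. swl (rho x) (\<lambda>w1 z1. swl (phi y) (\<lambda>w2 z2. \<beta> (w1 * w2) (z1 * z2))))"
    by (simp add: swl_phi mult.assoc)
  finally show ?thesis .
qed

abbreviation Lam where "Lam a \<gamma> \<equiv> swl (rho a) (\<lambda>w z. swl (D' z) (\<lambda>p q. \<gamma> w p q))"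

lemma K: "tri \<gamma> \<Longrightarrow> Lam a \<gamma> = swl (D' a) (\<lambda>x y. swl (rho x) (\<lambda>w1 z1. swl (rho y) (\<lambda>w2 z2. swl (phi w2) (\<lambda>u1 u2. \<gamma> (w1 * u1) (z1 * u2) z2))))"
proof -
  assume g: "tri \<gamma>"
  note R = R3 lf_tri1[OF g] lf_tri2[OF g] lf_tri3[OF g]
  have "Lam a \<gamma> = swl (rho a) (\<lambda>w z. swl (D z) (\<lambda>z1 z2. swl (rho z2) (\<lambda>w' z'. \<gamma> w (z1 * w') z')))"
  proof -
    have "\<And>w z. swl (D' z) (\<lambda>p q. \<gamma> w p q) = swl (D z) (\<lambda>z1 z2. swl (rho z2) (\<lambda>w' z'. \<gamma> w (z1 * w') z'))"
      by (rule rho_F1) (intro R)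
    then show ?thesis by simp
  qed
  also have "\<dots> = swl (D a) (\<lambda>a1 a2. swl (rho a1) (\<lambda>w1 z1. swl (rho a2) (\<lambda>w2 z2. swl (rho z2) (\<lambda>w' z'. \<gamma> (w1 * w2) (z1 * w') z'))))"
    by (rule rho_F3) (intro R)
  also have "\<dots> = swl (D a) (\<lambda>a1 a2. swl (rho a1) (\<lambda>w1 z1. swl (rho a2) (\<lambda>n z. swl (D' n) (\<lambda>p q. \<gamma> (w1 * p) (z1 * q) z))))"
  proof -
    have "\<And>w1 z1 a2. swl (rho a2) (\<lambda>w2 z2. swl (rho z2) (\<lambda>w' z'. \<gamma> (w1 * w2) (z1 * w') z'))
       = swl (rho a2) (\<lambda>n z. swl (D' n) (\<lambda>p q. \<gamma> (w1 * p) (z1 * q) z))"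
      by (rule rho_coassoc[symmetric]) (intro R)
    then show ?thesis by simp
  qed
  also have "\<dots> = swl (D a) (\<lambda>a1 a2. swl (rho a1) (\<lambda>w1 z1. swl (rho a2) (\<lambda>n z. swl (D' n) (\<lambda>x' y'. swl (rho x') (\<lambda>s1 t1. swl (phi y') (\<lambda>s2 t2. \<gamma> (w1 * (s1 * s2)) (z1 * (t1 * t2)) z))))))"
  proof -
    have "\<And>w1 z1 n z. swl (D' n) (\<lambda>p q. \<gamma> (w1 * p) (z1 * q) z) = swl (D' n) (\<lambda>x' y'. swl (rho x') (\<lambda>s1 t1. swl (phi y') (\<lambda>s2 t2. \<gamma> (w1 * (s1 * s2)) (z1 * (t1 * t2)) z)))"
      by (rule phi_i) (intro R)
    then show ?thesis by simp
  qed
  also have "\<dots> = swl (D a) (\<lambda>a1 a2. swl (rho a1) (\<lambda>w1 z1. swl (rho a2) (\<lambda>x' m. swl (rho m) (\<lambda>y' z. swl (rho x') (\<lambda>s1 t1. swl (phi y') (\<lambda>s2 t2. \<gamma> (w1 * (s1 * s2)) (z1 * (t1 * t2)) z))))))"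
  proof -
    have "\<And>w1 z1 a2. swl (rho a2) (\<lambda>n z. swl (D' n) (\<lambda>x' y'. swl (rho x') (\<lambda>s1 t1. swl (phi y') (\<lambda>s2 t2. \<gamma> (w1 * (s1 * s2)) (z1 * (t1 * t2)) z))))
      = swl (rho a2) (\<lambda>x' m. swl (rho m) (\<lambda>y' z. swl (rho x') (\<lambda>s1 t1. swl (phi y') (\<lambda>s2 t2. \<gamma> (w1 * (s1 * s2)) (z1 * (t1 * t2)) z))))"
      by (rule rho_coassoc) (intro R)
    then show ?thesis by simp
  qed
  also have "\<dots> = swl (D a) (\<lambda>a1 a2. swl (rho a1) (\<lambda>w1 z1. swl (rho a2) (\<lambda>x' m. swl (rho x') (\<lambda>s1 t1. swl (rho m) (\<lambda>y' z. swl (phi y') (\<lambda>s2 t2. \<gamma> (w1 * (s1 * s2)) (z1 * (t1 * t2)) z))))))"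
  proof -
    have "\<And>w1 z1 x' m. swl (rho m) (\<lambda>y' z. swl (rho x') (\<lambda>s1 t1. swl (phi y') (\<lambda>s2 t2. \<gamma> (w1 * (s1 * s2)) (z1 * (t1 * t2)) z)))
      = swl (rho x') (\<lambda>s1 t1. swl (rho m) (\<lambda>y' z. swl (phi y') (\<lambda>s2 t2. \<gamma> (w1 * (s1 * s2)) (z1 * (t1 * t2)) z)))"
      by (rule swl_swap)
    then show ?thesis by simp
  qed
  also have "\<dots> = swl (D a) (\<lambda>a1 a2. swl (rho a2) (\<lambda>x' m. swl (rho a1) (\<lambda>w1 z1. swl (rho x') (\<lambda>s1 t1. swl (rho m) (\<lambda>y' z. swl (phi y') (\<lambda>s2 t2. \<gamma> (w1 * (s1 * s2)) (z1 * (t1 * t2)) z))))))"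
  proof -
    have "\<And>a1 a2. swl (rho a1) (\<lambda>w1 z1. swl (rho a2) (\<lambda>x' m. swl (rho x') (\<lambda>s1 t1. swl (rho m) (\<lambda>y' z. swl (phi y') (\<lambda>s2 t2. \<gamma> (w1 * (s1 * s2)) (z1 * (t1 * t2)) z)))))
     = swl (rho a2) (\<lambda>x' m. swl (rho a1) (\<lambda>w1 z1. swl (rho x') (\<lambda>s1 t1. swl (rho m) (\<lambda>y' z. swl (phi y') (\<lambda>s2 t2. \<gamma> (w1 * (s1 * s2)) (z1 * (t1 * t2)) z)))))"
      by (rule swl_swap)
    then show ?thesis by simp
  qed
  also have "\<dots> = swl (D a) (\<lambda>a1 a2. swl (rho a2) (\<lambda>x' m. swl (rho (a1 * x')) (\<lambda>X Y. swl (rho m) (\<lambda>y' z. swl (phi y') (\<lambda>s2 t2. \<gamma> (X * s2) (Y * t2) z)))))"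
  proof -
    have "\<And>a1 x' m. swl (rho (a1 * x')) (\<lambda>X Y. swl (rho m) (\<lambda>y' z. swl (phi y') (\<lambda>s2 t2. \<gamma> (X * s2) (Y * t2) z)))
      = swl (rho a1) (\<lambda>w1 z1. swl (rho x') (\<lambda>s1 t1. swl (rho m) (\<lambda>y' z. swl (phi y') (\<lambda>s2 t2. \<gamma> (w1 * s1 * s2) (z1 * t1 * t2) z))))"
      by (rule rho_mult) (intro R)
    then show ?thesis by (simp add: mult.assoc)
  qed
  also have "\<dots> = swl (D' a) (\<lambda>x y. swl (rho x) (\<lambda>w1 z1. swl (rho y) (\<lambda>w2 z2. swl (phi w2) (\<lambda>u1 u2. \<gamma> (w1 * u1) (z1 * u2) z2))))"
    by (rule rho_F1[symmetric]) (intro R)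
  finally show ?thesis .
qed

lemma Lam_mult: "tri \<gamma> \<Longrightarrow> Lam (a * b) \<gamma> = Lam a (\<lambda>x1 y1 z1. Lam b (\<lambda>x2 y2 z2. \<gamma> (x1 * x2) (y1 * y2) (z1 * z2)))"
proof -
  assume g: "tri \<gamma>"
  note R = R3 lf_tri1[OF g] lf_tri2[OF g] lf_tri3[OF g]
  have "Lam (a * b) \<gamma> = swl (rho a) (\<lambda>w1 z1. swl (rho b) (\<lambda>w2 z2. swl (D' (z1 * z2)) (\<lambda>p q. \<gamma> (w1 * w2) p q)))"
    by (rule rho_mult) (intro R)
  also have "\<dots> = swl (rho a) (\<lambda>w1 z1. swl (rho b) (\<lambda>w2 z2. swl (D' z1) (\<lambda>p1 q1. swl (D' z2) (\<lambda>p2 q2. \<gamma> (w1 * w2) (p1 * p2) (q1 * q2)))))"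
  proof -
    have "\<And>w1 w2 z1 z2. swl (D' (z1 * z2)) (\<lambda>p q. \<gamma> (w1 * w2) p q) = swl (D' z1) (\<lambda>p1 q1. swl (D' z2) (\<lambda>p2 q2. \<gamma> (w1 * w2) (p1 * p2) (q1 * q2)))"
      by (rule H'.mult) (intro R)
    then show ?thesis by simp
  qed
  also have "\<dots> = swl (rho a) (\<lambda>w1 z1. swl (D' z1) (\<lambda>p1 q1. swl (rho b) (\<lambda>w2 z2. swl (D' z2) (\<lambda>p2 q2. \<gamma> (w1 * w2) (p1 * p2) (q1 * q2)))))"
  proof -
    have "\<And>w1 z1. swl (rho b) (\<lambda>w2 z2. swl (D' z1) (\<lambda>p1 q1. swl (D' z2) (\<lambda>p2 q2. \<gamma> (w1 * w2) (p1 * p2) (q1 * q2))))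
      = swl (D' z1) (\<lambda>p1 q1. swl (rho b) (\<lambda>w2 z2. swl (D' z2) (\<lambda>p2 q2. \<gamma> (w1 * w2) (p1 * p2) (q1 * q2))))"
      by (rule swl_swap)
    then show ?thesis by simp
  qed
  finally show ?thesis .
qed

lemma Lam_unit: "tri \<gamma> \<Longrightarrow> Lam 1 \<gamma> = \<gamma> 1 1 1"
proof -
  assume g: "tri \<gamma>"
  note R = R3 lf_tri1[OF g] lf_tri2[OF g] lf_tri3[OF g]
  have "Lam 1 \<gamma> = swl (D' 1) (\<lambda>p q. \<gamma> 1 p q)" by (rule rho_unit) (intro R)
  also have "\<dots> = \<gamma> 1 1 1" by (rule H'.unit) (intro R)
  finally show ?thesis .
qed

definition quad :: "('a \<Rightarrow> 'a \<Rightarrow> 'a \<Rightarrow> 'a \<Rightarrow> 'k) \<Rightarrow> bool" where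
  "quad F \<longleftrightarrow> (\<forall>b c d. lf (\<lambda>a. F a b c d)) \<and> (\<forall>a c d. lf (\<lambda>b. F a b c d)) \<and>
     (\<forall>a b d. lf (\<lambda>c. F a b c d)) \<and> (\<forall>a b c. lf (\<lambda>d. F a b c d))"

lemma quadI: "(\<And>b c d. lf (\<lambda>a. F a b c d)) \<Longrightarrow> (\<And>a c d. lf (\<lambda>b. F a b c d)) \<Longrightarrow>
     (\<And>a b d. lf (\<lambda>c. F a b c d)) \<Longrightarrow> (\<And>a b c. lf (\<lambda>d. F a b c d)) \<Longrightarrow> quad F"
  by (simp add: quad_def)
lemma lf_quad1: "quad F \<Longrightarrow> le g \<Longrightarrow> lf (\<lambda>x. F (g x) b c d)"
  unfolding quad_def using lf_comp[of "\<lambda>x. F x b c d" g] by auto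
lemma lf_quad2: "quad F \<Longrightarrow> le g \<Longrightarrow> lf (\<lambda>x. F a (g x) c d)"
  unfolding quad_def using lf_comp[of "\<lambda>x. F a x c d" g] by auto
lemma lf_quad3: "quad F \<Longrightarrow> le g \<Longrightarrow> lf (\<lambda>x. F a b (g x) d)"
  unfolding quad_def using lf_comp[of "\<lambda>x. F a b x d" g] by auto
lemma lf_quad4: "quad F \<Longrightarrow> le g \<Longrightarrow> lf (\<lambda>x. F a b c (g x))"
  unfolding quad_def using lf_comp[of "\<lambda>x. F a b c x" g] by auto

lemma expand_L:
  fixes X :: "'a \<Rightarrow> ('a \<Rightarrow> 'a \<Rightarrow> 'a \<Rightarrow> 'k) \<Rightarrow> 'k"
  assumes X: "quad (\<lambda>x1 y1 z1 h. X h (\<lambda>x y z. \<gamma> (x1 * x) (y1 * y) (z1 * z)))"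
  shows "X a \<gamma> = swl (D' a) (\<lambda>a1 r. Lam (T a1) (\<lambda>x1 y1 z1. swl (D' r) (\<lambda>a2 a3. Lam a2 (\<lambda>x2 y2 z2.
      X a3 (\<lambda>x y z. \<gamma> (x1 * (x2 * x)) (y1 * (y2 * y)) (z1 * (z2 * z)))))))"
proof -
  define \<Phi> where "\<Phi> x1 y1 z1 h = X h (\<lambda>x y z. \<gamma> (x1 * x) (y1 * y) (z1 * z))" for x1 y1 z1 h
  have tP: "quad \<Phi>" unfolding \<Phi>_def by (rule X)
  note R = R3 lf_quad1[OF tP] lf_quad2[OF tP] lf_quad3[OF tP] lf_quad4[OF tP]
  have "X a \<gamma> = \<Phi> 1 1 1 a" by (simp add: \<Phi>_def)
  also have "\<dots> = swl (D' a) (\<lambda>y a3. e y * \<Phi> 1 1 1 a3)"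
    by (rule C'L[symmetric]) (intro R)
  also have "\<dots> = swl (D' a) (\<lambda>y a3. swl (D' y) (\<lambda>a1 a2. Lam (T a1 * a2) (\<lambda>x1 y1 z1. \<Phi> x1 y1 z1 a3)))"
  proof -
    have "\<And>y a3. swl (D' y) (\<lambda>a1 a2. Lam (T a1 * a2) (\<lambda>x1 y1 z1. \<Phi> x1 y1 z1 a3)) = e y * Lam 1 (\<lambda>x1 y1 z1. \<Phi> x1 y1 z1 a3)"
      by (rule A'L) (intro R)
    moreover have "\<And>a3. Lam 1 (\<lambda>x1 y1 z1. \<Phi> x1 y1 z1 a3) = \<Phi> 1 1 1 a3"
      by (rule Lam_unit) (intro R)
    ultimately show ?thesis by simp
  qed
  also have "\<dots> = swl (D' a) (\<lambda>a1 r. swl (D' r) (\<lambda>a2 a3. Lam (T a1 * a2) (\<lambda>x1 y1 z1. \<Phi> x1 y1 z1 a3)))"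
    by (rule H'.coassoc) (intro R)
  also have "\<dots> = swl (D' a) (\<lambda>a1 r. swl (D' r) (\<lambda>a2 a3. Lam (T a1) (\<lambda>x1 y1 z1. Lam a2 (\<lambda>x2 y2 z2. \<Phi> (x1 * x2) (y1 * y2) (z1 * z2) a3))))"
  proof -
    have "\<And>a1 a2 a3. Lam (T a1 * a2) (\<lambda>x1 y1 z1. \<Phi> x1 y1 z1 a3) = Lam (T a1) (\<lambda>x1 y1 z1. Lam a2 (\<lambda>x2 y2 z2. \<Phi> (x1 * x2) (y1 * y2) (z1 * z2) a3))"
      by (rule Lam_mult) (intro R)
    then show ?thesis by simp
  qed
  also have "\<dots> = swl (D' a) (\<lambda>a1 r. swl (rho (T a1)) (\<lambda>w z. swl (D' r) (\<lambda>a2 a3. swl (D' z) (\<lambda>p q. Lam a2 (\<lambda>x2 y2 z2. \<Phi> (w * x2) (p * y2) (q * z2) a3)))))"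
  proof -
    have "\<And>a1 r. swl (D' r) (\<lambda>a2 a3. swl (rho (T a1)) (\<lambda>w z. swl (D' z) (\<lambda>p q. Lam a2 (\<lambda>x2 y2 z2. \<Phi> (w * x2) (p * y2) (q * z2) a3))))
       = swl (rho (T a1)) (\<lambda>w z. swl (D' r) (\<lambda>a2 a3. swl (D' z) (\<lambda>p q. Lam a2 (\<lambda>x2 y2 z2. \<Phi> (w * x2) (p * y2) (q * z2) a3))))"
      by (rule swl_swap)
    then show ?thesis by simp
  qed
  also have "\<dots> = swl (D' a) (\<lambda>a1 r. swl (rho (T a1)) (\<lambda>w z. swl (D' z) (\<lambda>p q. swl (D' r) (\<lambda>a2 a3. Lam a2 (\<lambda>x2 y2 z2. \<Phi> (w * x2) (p * y2) (q * z2) a3)))))"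
  proof -
    have "\<And>w z r. swl (D' r) (\<lambda>a2 a3. swl (D' z) (\<lambda>p q. Lam a2 (\<lambda>x2 y2 z2. \<Phi> (w * x2) (p * y2) (q * z2) a3)))
       = swl (D' z) (\<lambda>p q. swl (D' r) (\<lambda>a2 a3. Lam a2 (\<lambda>x2 y2 z2. \<Phi> (w * x2) (p * y2) (q * z2) a3)))"
      by (rule swl_swap)
    then show ?thesis by simp
  qed
  also have "\<dots> = swl (D' a) (\<lambda>a1 r. Lam (T a1) (\<lambda>x1 y1 z1. swl (D' r) (\<lambda>a2 a3. Lam a2 (\<lambda>x2 y2 z2.
      X a3 (\<lambda>x y z. \<gamma> (x1 * (x2 * x)) (y1 * (y2 * y)) (z1 * (z2 * z)))))))"
    by (simp add: \<Phi>_def mult.assoc)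
  finally show ?thesis .
qed

lemma cancel_L:
  fixes X Y :: "'a \<Rightarrow> ('a \<Rightarrow> 'a \<Rightarrow> 'a \<Rightarrow> 'k) \<Rightarrow> 'k"
  assumes X: "quad (\<lambda>x1 y1 z1 h. X h (\<lambda>x y z. \<gamma> (x1 * x) (y1 * y) (z1 * z)))"
    and Y: "quad (\<lambda>x1 y1 z1 h. Y h (\<lambda>x y z. \<gamma> (x1 * x) (y1 * y) (z1 * z)))"
    and XY: "\<And>h \<gamma>. tri \<gamma> \<Longrightarrow> swl (D' h) (\<lambda>h1 h2. Lam h1 (\<lambda>x1 y1 z1. X h2 (\<lambda>x y z. \<gamma> (x1 * x) (y1 * y) (z1 * z))))
               = swl (D' h) (\<lambda>h1 h2. Lam h1 (\<lambda>x1 y1 z1. Y h2 (\<lambda>x y z. \<gamma> (x1 * x) (y1 * y) (z1 * z))))"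
    and g: "tri \<gamma>"
  shows "X a \<gamma> = Y a \<gamma>"
proof -
  have "\<And>x1 y1 z1 r. swl (D' r) (\<lambda>a2 a3. Lam a2 (\<lambda>x2 y2 z2. X a3 (\<lambda>x y z. \<gamma> (x1 * (x2 * x)) (y1 * (y2 * y)) (z1 * (z2 * z)))))
    = swl (D' r) (\<lambda>a2 a3. Lam a2 (\<lambda>x2 y2 z2. Y a3 (\<lambda>x y z. \<gamma> (x1 * (x2 * x)) (y1 * (y2 * y)) (z1 * (z2 * z)))))"
  proof -
    fix x1 y1 z1 r
    have t: "tri (\<lambda>x y z. \<gamma> (x1 * x) (y1 * y) (z1 * z))"
      by (intro triI lf_tri1[OF g] lf_tri2[OF g] lf_tri3[OF g] le_cmul le_id)
    show "?thesis x1 y1 z1 r" using XY[OF t, of r] by simp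
  qed
  note eq = this
  show ?thesis
    apply (subst expand_L[OF X])
    apply (subst expand_L[OF Y])
    apply (simp only: eq)
    done
qed

abbreviation Pphi where "Pphi a \<gamma> \<equiv> swl (phi a) (\<lambda>v w. swl (phi v) (\<lambda>x y. \<gamma> x y w))"
abbreviation Qphi where "Qphi a \<gamma> \<equiv> swl (phi a) (\<lambda>v w. swl (D' w) (\<lambda>y z. \<gamma> v y z))"

lemma alphaQ: "tri \<gamma> \<Longrightarrow> swl (D' h) (\<lambda>h1 h2. Lam h1 (\<lambda>x1 y1 z1. Qphi h2 (\<lambda>x y z. \<gamma> (x1 * x) (y1 * y) (z1 * z))))
   = swl (D' h) (\<lambda>s t. swl (D' t) (\<lambda>y z. \<gamma> s y z))"
proof -
  assume g: "tri \<gamma>"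
  note R = R3 lf_tri1[OF g] lf_tri2[OF g] lf_tri3[OF g]
  have "swl (D' h) (\<lambda>h1 h2. Lam h1 (\<lambda>x1 y1 z1. Qphi h2 (\<lambda>x y z. \<gamma> (x1 * x) (y1 * y) (z1 * z))))
    = swl (D' h) (\<lambda>h1 h2. swl (rho h1) (\<lambda>w1 m1. swl (phi h2) (\<lambda>v w. swl (D' m1) (\<lambda>y1 z1. swl (D' w) (\<lambda>y z. \<gamma> (w1 * v) (y1 * y) (z1 * z))))))"
  proof -
    have "\<And>w1 m1 h2. swl (D' m1) (\<lambda>y1 z1. swl (phi h2) (\<lambda>v w. swl (D' w) (\<lambda>y z. \<gamma> (w1 * v) (y1 * y) (z1 * z))))
      = swl (phi h2) (\<lambda>v w. swl (D' m1) (\<lambda>y1 z1. swl (D' w) (\<lambda>y z. \<gamma> (w1 * v) (y1 * y) (z1 * z))))"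
      by (rule swl_swap)
    then show ?thesis by simp
  qed
  also have "\<dots> = swl (D' h) (\<lambda>h1 h2. swl (rho h1) (\<lambda>w1 m1. swl (phi h2) (\<lambda>v w. swl (D' (m1 * w)) (\<lambda>y z. \<gamma> (w1 * v) y z))))"
  proof -
    have "\<And>w1 m1 v w. swl (D' (m1 * w)) (\<lambda>y z. \<gamma> (w1 * v) y z) = swl (D' m1) (\<lambda>y1 z1. swl (D' w) (\<lambda>y z. \<gamma> (w1 * v) (y1 * y) (z1 * z)))"
      by (rule H'.mult) (intro R)
    then show ?thesis by simp
  qed
  also have "\<dots> = swl (D' h) (\<lambda>s t. swl (D' t) (\<lambda>y z. \<gamma> s y z))"
    by (rule phi_i[symmetric]) (intro R)
  finally show ?thesis .
qed

lemma alphaP: "tri \<gamma> \<Longrightarrow> swl (D' h) (\<lambda>h1 h2. Lam h1 (\<lambda>x1 y1 z1. Pphi h2 (\<lambda>x y z. \<gamma> (x1 * x) (y1 * y) (z1 * z))))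
   = swl (D' h) (\<lambda>d t. swl (D' d) (\<lambda>p q. \<gamma> p q t))"
proof -
  assume g: "tri \<gamma>"
  note R = R3 lf_tri1[OF g] lf_tri2[OF g] lf_tri3[OF g]
  have "swl (D' h) (\<lambda>h1 h2. Lam h1 (\<lambda>x1 y1 z1. Pphi h2 (\<lambda>x y z. \<gamma> (x1 * x) (y1 * y) (z1 * z))))
    = swl (D' h) (\<lambda>h1 h2. swl (D' h1) (\<lambda>a b. swl (rho a) (\<lambda>w1 z1. swl (rho b) (\<lambda>w2 z2. swl (phi w2) (\<lambda>u1 u2.
         swl (phi h2) (\<lambda>v w. swl (phi v) (\<lambda>x y. \<gamma> (w1 * u1 * x) (z1 * u2 * y) (z2 * w))))))))"
  proof -
    have "\<And>h1 h2. Lam h1 (\<lambda>x1 y1 z1. Pphi h2 (\<lambda>x y z. \<gamma> (x1 * x) (y1 * y) (z1 * z)))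
      = swl (D' h1) (\<lambda>a b. swl (rho a) (\<lambda>w1 z1. swl (rho b) (\<lambda>w2 z2. swl (phi w2) (\<lambda>u1 u2.
         Pphi h2 (\<lambda>x y z. \<gamma> (w1 * u1 * x) (z1 * u2 * y) (z2 * z))))))"
      by (rule K) (intro R)
    then show ?thesis by simp
  qed
  also have "\<dots> = swl (D' h) (\<lambda>a c. swl (D' c) (\<lambda>b h2. swl (rho a) (\<lambda>w1 z1. swl (rho b) (\<lambda>w2 z2. swl (phi w2) (\<lambda>u1 u2.
         swl (phi h2) (\<lambda>v w. swl (phi v) (\<lambda>x y. \<gamma> (w1 * u1 * x) (z1 * u2 * y) (z2 * w))))))))"
    by (rule H'.coassoc) (intro R)
  also have "\<dots> = swl (D' h) (\<lambda>a c. swl (rho a) (\<lambda>w1 z1. swl (D' c) (\<lambda>b h2. swl (rho b) (\<lambda>w2 z2. swl (phi w2) (\<lambda>u1 u2.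
         swl (phi h2) (\<lambda>v w. swl (phi v) (\<lambda>x y. \<gamma> (w1 * u1 * x) (z1 * u2 * y) (z2 * w))))))))"
  proof -
    have "\<And>a c. swl (D' c) (\<lambda>b h2. swl (rho a) (\<lambda>w1 z1. swl (rho b) (\<lambda>w2 z2. swl (phi w2) (\<lambda>u1 u2.
         swl (phi h2) (\<lambda>v w. swl (phi v) (\<lambda>x y. \<gamma> (w1 * u1 * x) (z1 * u2 * y) (z2 * w)))))))
     = swl (rho a) (\<lambda>w1 z1. swl (D' c) (\<lambda>b h2. swl (rho b) (\<lambda>w2 z2. swl (phi w2) (\<lambda>u1 u2.
         swl (phi h2) (\<lambda>v w. swl (phi v) (\<lambda>x y. \<gamma> (w1 * u1 * x) (z1 * u2 * y) (z2 * w)))))))"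
      by (rule swl_swap)
    then show ?thesis by simp
  qed
  also have "\<dots> = swl (D' h) (\<lambda>a c. swl (rho a) (\<lambda>w1 z1. swl (D' c) (\<lambda>b h2. swl (rho b) (\<lambda>w2 z2.
         swl (phi h2) (\<lambda>v w. swl (phi w2) (\<lambda>u1 u2. swl (phi v) (\<lambda>x y. \<gamma> (w1 * u1 * x) (z1 * u2 * y) (z2 * w))))))))"
  proof -
    have "\<And>w1 z1 w2 z2 h2. swl (phi w2) (\<lambda>u1 u2. swl (phi h2) (\<lambda>v w. swl (phi v) (\<lambda>x y. \<gamma> (w1 * u1 * x) (z1 * u2 * y) (z2 * w))))
      = swl (phi h2) (\<lambda>v w. swl (phi w2) (\<lambda>u1 u2. swl (phi v) (\<lambda>x y. \<gamma> (w1 * u1 * x) (z1 * u2 * y) (z2 * w))))"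
      by (rule swl_swap)
    then show ?thesis by simp
  qed
  also have "\<dots> = swl (D' h) (\<lambda>a c. swl (rho a) (\<lambda>w1 z1. swl (D' c) (\<lambda>b h2. swl (rho b) (\<lambda>w2 z2.
         swl (phi h2) (\<lambda>v w. swl (phi (w2 * v)) (\<lambda>U1 U2. \<gamma> (w1 * U1) (z1 * U2) (z2 * w)))))))"
  proof -
    have "\<And>w1 z1 w2 z2 v w. swl (phi (w2 * v)) (\<lambda>U1 U2. \<gamma> (w1 * U1) (z1 * U2) (z2 * w))
      = swl (phi w2) (\<lambda>u1 u2. swl (phi v) (\<lambda>x y. \<gamma> (w1 * (u1 * x)) (z1 * (u2 * y)) (z2 * w)))"
      by (rule phi_mult) (intro R)
    then show ?thesis by (simp add: mult.assoc)
  qed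
  also have "\<dots> = swl (D' h) (\<lambda>a c. swl (rho a) (\<lambda>w1 z1. swl (D' c) (\<lambda>s t. swl (phi s) (\<lambda>U1 U2. \<gamma> (w1 * U1) (z1 * U2) t))))"
  proof -
    have "\<And>w1 z1 c. swl (D' c) (\<lambda>s t. swl (phi s) (\<lambda>U1 U2. \<gamma> (w1 * U1) (z1 * U2) t))
      = swl (D' c) (\<lambda>b h2. swl (rho b) (\<lambda>w2 z2. swl (phi h2) (\<lambda>v w. swl (phi (w2 * v)) (\<lambda>U1 U2. \<gamma> (w1 * U1) (z1 * U2) (z2 * w)))))"
      by (rule phi_i) (intro R)
    then show ?thesis by simp
  qed
  also have "\<dots> = swl (D' h) (\<lambda>a c. swl (D' c) (\<lambda>s t. swl (rho a) (\<lambda>w1 z1. swl (phi s) (\<lambda>U1 U2. \<gamma> (w1 * U1) (z1 * U2) t))))"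
  proof -
    have "\<And>a c. swl (rho a) (\<lambda>w1 z1. swl (D' c) (\<lambda>s t. swl (phi s) (\<lambda>U1 U2. \<gamma> (w1 * U1) (z1 * U2) t)))
      = swl (D' c) (\<lambda>s t. swl (rho a) (\<lambda>w1 z1. swl (phi s) (\<lambda>U1 U2. \<gamma> (w1 * U1) (z1 * U2) t)))"
      by (rule swl_swap)
    then show ?thesis by simp
  qed
  also have "\<dots> = swl (D' h) (\<lambda>d t. swl (D' d) (\<lambda>a s. swl (rho a) (\<lambda>w1 z1. swl (phi s) (\<lambda>U1 U2. \<gamma> (w1 * U1) (z1 * U2) t))))"
    by (rule H'.coassoc[symmetric]) (intro R)
  also have "\<dots> = swl (D' h) (\<lambda>d t. swl (D' d) (\<lambda>p q. \<gamma> p q t))"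
  proof -
    have "\<And>d t. swl (D' d) (\<lambda>p q. \<gamma> p q t) = swl (D' d) (\<lambda>a s. swl (rho a) (\<lambda>w1 z1. swl (phi s) (\<lambda>U1 U2. \<gamma> (w1 * U1) (z1 * U2) t)))"
      by (rule phi_i) (intro R)
    then show ?thesis by simp
  qed
  finally show ?thesis .
qed

lemma phi_coassoc: "tri \<gamma> \<Longrightarrow> Pphi a \<gamma> = Qphi a \<gamma>"
proof (rule cancel_L[where X = Pphi and Y = Qphi])
  assume g: "tri \<gamma>"
  note R = R3 lf_tri1[OF g] lf_tri2[OF g] lf_tri3[OF g]
  show "quad (\<lambda>x1 y1 z1 h. Pphi h (\<lambda>x y z. \<gamma> (x1 * x) (y1 * y) (z1 * z)))" by (intro quadI R)
  show "quad (\<lambda>x1 y1 z1 h. Qphi h (\<lambda>x y z. \<gamma> (x1 * x) (y1 * y) (z1 * z)))" by (intro quadI R)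
next
  fix h and \<gamma> :: "'a \<Rightarrow> 'a \<Rightarrow> 'a \<Rightarrow> 'k" assume g: "tri \<gamma>"
  show "swl (D' h) (\<lambda>h1 h2. Lam h1 (\<lambda>x1 y1 z1. Pphi h2 (\<lambda>x y z. \<gamma> (x1 * x) (y1 * y) (z1 * z)))) =
        swl (D' h) (\<lambda>h1 h2. Lam h1 (\<lambda>x1 y1 z1. Qphi h2 (\<lambda>x y z. \<gamma> (x1 * x) (y1 * y) (z1 * z))))"
    using alphaP[OF g, of h] alphaQ[OF g, of h] H'.coassoc[OF g, of h] by simp
qed

lemma part2: "right_comodule_algebra sc D' e' phi"
  unfolding right_comodule_algebra_def
proof (intro conjI allI)
  show "lin_to_tensor sc phi" by (rule phi_lin)
next
  fix a
  show "teq3 sc (concat (map (\<lambda>(v, w). map (\<lambda>(x, y). (x, y, w)) (phi v)) (phi a)))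
                  (concat (map (\<lambda>(v, w). map (\<lambda>(x, y). (v, x, y)) (D' w)) (phi a)))"
    unfolding teq3_iff using phi_coassoc by simp
next
  fix a
  show "sum_list (map (\<lambda>(v, w). sc (e' w) v) (phi a)) = a"
  proof (rule sep)
    fix f assume f: "lf f"
    have "f (sum_list (map (\<lambda>(v, w). sc (e' w) v) (phi a))) = swl (phi a) (\<lambda>v w. f v * e w)"
      by (simp add: lf_sum_map[OF f] swl_def lf_sc_D[OF f] e'_eq mult.commute)
    also have "\<dots> = f a" by (rule phi_counit[OF f])
    finally show "f (sum_list (map (\<lambda>(v, w). sc (e' w) v) (phi a))) = f a" .
  qed
next
  fix a b
  show "teq2 sc (phi (a * b)) (tmul (phi a) (phi b))"
    unfolding teq2_iff using phi_mult by (simp add: tmul_def)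
next
  show "teq2 sc (phi 1) [(1, 1)]"
    unfolding teq2_iff using phi_unit by simp
qed

end

theorem lemma2p8:
  fixes sc :: "'k::field \<Rightarrow> 'a::comm_ring_1 \<Rightarrow> 'a"
    and D D' :: "'a \<Rightarrow> ('a \<times> 'a) list"
    and e e' :: "'a \<Rightarrow> 'k"
    and S T :: "'a \<Rightarrow> 'a"
  assumes "hopf_brace sc D e S D' e' T"
  shows "left_comodule_algebra sc D' e' (brace_rho D S D')
       \<and> right_comodule_algebra sc D' e' (brace_phi D S D' T)
       \<and> (\<forall>a. teq2 sc (map (\<lambda>(x, y). (x, S y)) (brace_rho D S D' a)) (brace_rho D S D' (S a)))"
proof -
  have k: "k_algebra sc" using assms by (simp add: hopf_brace_def hopf_algebra_def)
  interpret brace sc D e S D' e' T using assms k by unfold_locales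
  show ?thesis using part1 part2 part3 by blast
qed

end
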